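(* Let $S,T\subseteq(\Sigma\cup\Gamma)^*$ be regular languages of finite shiftlag such that $\mathit{maxsync}(T,T)$ is regular. Then $\llbracket S\rrbracket\in\textsc{Rel}(T)$ if and only if $\mathit{maxsync}(S,T)$ is regular and $\llbracket S\rrbracket\subseteq\llbracket T\rrbracket$.
   Context: $\Sigma,\Gamma$ are disjoint finite alphabets. For $w\in(\Sigma\cup\Gamma)^*$, $\llbracket w\rrbracket=(\pi_{\mathtt i}(w),\pi_{\mathtt o}(w))$ where $\pi_{\mathtt i}$ (resp. $\pi_{\mathtt o}$) deletes all letters of $\Gamma$ (resp. $\Sigma$), and $\llbracket L\rrbracket=\{\llbracket w\rrbracket:w\in L\}$. $\textsc{Rel}(T)=\{\llbracket T'\rrbracket: T'\subseteq T,\ T'\text{ regular}\}$. A position $i$ of $w$ is $\geq k$-lagged if the absolute difference between the numbers of $\Sigma$-letters and $\Gamma$-letters in $w[1..i]$ is at least $k$. A shift of $w$ is a position $i\in\{1,\dots,|w|-1\}$ with exactly one of $w[i],w[i+1]$ in $\Sigma$; shifts $i<j$ are consecutive if no shift lies strictly between them. $\mathit{shift}(w)$ is the number of shifts; $\mathit{shiftlag}(w)$ is the maximal $n$ such that $w$ contains $n$ consecutive shifts all $\geq n$-lagged. A language has finite shift (resp. finite shiftlag) if the supremum of $\mathit{shift}$ (resp. $\mathit{shiftlag}$) over its words is finite; $\mathrm{Reg}_{\mathsf{FS}}$ denotes the class of regular languages of finite shift. For $x\in(\Sigma\cup\Gamma)^*$, $x^{-1}T=\{z: xz\in T\}$,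 and $w[1,i]$ is the prefix of $w$ of length $i$. For $w,w'\in T$ with $\llbracket w\rrbracket=\llbracket w'\rrbracket$, write $w\preceq_T w'$ if for all $i\le|w|$, $(w'[1,i])^{-1}T\in\mathrm{Reg}_{\mathsf{FS}}$ implies $(w[1,i])^{-1}T\in\mathrm{Reg}_{\mathsf{FS}}$. For languages $S,T$, $\mathit{maxsync}(S,T)=\{w\in T:\llbracket w\rrbracket\in\llbracket S\rrbracket,\ w'\preceq_T w\text{ for all }w'\in T\text{ with }\llbracket w'\rrbracket=\llbracket w\rrbracket\}$. *)

theory Defs
  imports Main
begin

definition regular :: "'a set \<Rightarrow> 'a list set \<Rightarrow> bool" where
  "regular A L \<longleftrightarrow> L \<subseteq> lists A \<and>
     (\<exists>(Q::nat set) q0 \<delta> F. finite Q \<and> q0 \<in> Q \<and> F \<subseteq> Q \<and>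
        (\<forall>q\<in>Q. \<forall>a\<in>A. \<delta> q a \<in> Q) \<and> L = {w \<in> lists A. foldl \<delta> q0 w \<in> F})"

definition sem :: "'a set \<Rightarrow> 'a set \<Rightarrow> 'a list \<Rightarrow> 'a list \<times> 'a list" where
  "sem Sig Gam w = (filter (\<lambda>x. x \<in> Sig) w, filter (\<lambda>x. x \<in> Gam) w)"

definition semL :: "'a set \<Rightarrow> 'a set \<Rightarrow> 'a list set \<Rightarrow> ('a list \<times> 'a list) set" where
  "semL Sig Gam L = sem Sig Gam ` L"

definition Rel :: "'a set \<Rightarrow> 'a set \<Rightarrow> 'a list set \<Rightarrow> ('a list \<times> 'a list) set set" where
  "Rel Sig Gam T = {semL Sig Gam T' | T'. T' \<subseteq> T \<and> regular (Sig \<union> Gam) T'}"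

text \<open>Position i (1-based) of w is >= k-lagged.\<close>
definition lagged :: "'a set \<Rightarrow> 'a set \<Rightarrow> 'a list \<Rightarrow> nat \<Rightarrow> nat \<Rightarrow> bool" where
  "lagged Sig Gam w i k \<longleftrightarrow>
     \<bar>int (length (filter (\<lambda>x. x \<in> Sig) (take i w))) - int (length (filter (\<lambda>x. x \<in> Gam) (take i w)))\<bar> \<ge> int k"

text \<open>Shifts of w: positions i in 1..|w|-1 (1-based) with exactly one of w[i], w[i+1] in Sig.\<close>
definition shifts :: "'a set \<Rightarrow> 'a list \<Rightarrow> nat set" where
  "shifts Sig w = {i. 1 \<le> i \<and> i < length w \<and> ((w ! (i - 1) \<in> Sig) \<noteq> (w ! i \<in> Sig))}"

definition shift :: "'a set \<Rightarrow> 'a list \<Rightarrow> nat" where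
  "shift Sig w = card (shifts Sig w)"

text \<open>w contains n consecutive shifts, all >= n-lagged (consecutive shifts = all shifts in an interval).\<close>
definition has_shiftlag :: "'a set \<Rightarrow> 'a set \<Rightarrow> 'a list \<Rightarrow> nat \<Rightarrow> bool" where
  "has_shiftlag Sig Gam w n \<longleftrightarrow>
     (\<exists>a b. card {p \<in> shifts Sig w. a \<le> p \<and> p \<le> b} = n \<and>
            (\<forall>p \<in> shifts Sig w. a \<le> p \<and> p \<le> b \<longrightarrow> lagged Sig Gam w p n))"

definition shiftlag :: "'a set \<Rightarrow> 'a set \<Rightarrow> 'a list \<Rightarrow> nat" where
  "shiftlag Sig Gam w = Max {n. has_shiftlag Sig Gam w n}"

definition finite_shift :: "'a set \<Rightarrow> 'a list set \<Rightarrow> bool" where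
  "finite_shift Sig L \<longleftrightarrow> (\<exists>N. \<forall>w\<in>L. shift Sig w \<le> N)"

definition finite_shiftlag :: "'a set \<Rightarrow> 'a set \<Rightarrow> 'a list set \<Rightarrow> bool" where
  "finite_shiftlag Sig Gam L \<longleftrightarrow> (\<exists>N. \<forall>w\<in>L. shiftlag Sig Gam w \<le> N)"

definition RegFS :: "'a set \<Rightarrow> 'a set \<Rightarrow> 'a list set \<Rightarrow> bool" where
  "RegFS Sig Gam L \<longleftrightarrow> regular (Sig \<union> Gam) L \<and> finite_shift Sig L"

definition lquot :: "'a list \<Rightarrow> 'a list set \<Rightarrow> 'a list set" where
  "lquot x T = {z. x @ z \<in> T}"

definition preceq :: "'a set \<Rightarrow> 'a set \<Rightarrow> 'a list set \<Rightarrow> 'a list \<Rightarrow> 'a list \<Rightarrow> bool" where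
  "preceq Sig Gam T w w' \<longleftrightarrow> w \<in> T \<and> w' \<in> T \<and> sem Sig Gam w = sem Sig Gam w' \<and>
     (\<forall>i \<le> length w. RegFS Sig Gam (lquot (take i w') T) \<longrightarrow> RegFS Sig Gam (lquot (take i w) T))"

definition maxsync :: "'a set \<Rightarrow> 'a set \<Rightarrow> 'a list set \<Rightarrow> 'a list set \<Rightarrow> 'a list set" where
  "maxsync Sig Gam S T = {w \<in> T. sem Sig Gam w \<in> semL Sig Gam S \<and>
     (\<forall>w' \<in> T. sem Sig Gam w' = sem Sig Gam w \<longrightarrow> preceq Sig Gam T w' w)}"

end

theory Submission
  imports Defs
begin

definition quots :: "'a set \<Rightarrow> 'a list set \<Rightarrow> 'a list set set" where
  "quots A L = {lquot x L | x. x \<in> lists A}"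

lemma lquot_append: "lquot (x @ y) L = lquot y (lquot x L)"
  by (auto simp: lquot_def)

lemma lquot_Nil[simp]: "lquot [] L = L"
  by (auto simp: lquot_def)

lemma regular_imp_quots:
  assumes "regular A L" shows "L \<subseteq> lists A \<and> finite (quots A L)"
proof -
  obtain Q :: "nat set" and q0 \<delta> F where fin: "finite Q" and q0: "q0 \<in> Q" and FQ: "F \<subseteq> Q"
    and cl: "\<forall>q\<in>Q. \<forall>a\<in>A. \<delta> q a \<in> Q" and L: "L = {w \<in> lists A. foldl \<delta> q0 w \<in> F}"
    using assms unfolding regular_def by blast
  have inQ: "foldl \<delta> q x \<in> Q" if "q \<in> Q" "x \<in> lists A" for q x
    using that by (induction x arbitrary: q) (auto simp: cl)
  have "quots A L \<subseteq> (\<lambda>q. {z \<in> lists A. foldl \<delta> q z \<in> F}) ` Q"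
  proof
    fix K assume "K \<in> quots A L"
    then obtain x where x: "x \<in> lists A" "K = lquot x L" by (auto simp: quots_def)
    have "K = {z \<in> lists A. foldl \<delta> (foldl \<delta> q0 x) z \<in> F}"
      using x by (auto simp: L lquot_def)
    then show "K \<in> (\<lambda>q. {z \<in> lists A. foldl \<delta> q z \<in> F}) ` Q" using inQ[OF q0 x(1)] by blast
  qed
  then have "finite (quots A L)" using fin finite_surj by blast
  then show ?thesis using L by auto
qed

lemma quots_imp_regular:
  assumes sub: "L \<subseteq> lists A" and fin: "finite (quots A L)"
  shows "regular A L"
proof -
  let ?E = "quots A L"
  obtain f :: "'a list set \<Rightarrow> nat" and n where f: "f ` ?E = {i. i < n}" "inj_on f ?E"
    using finite_imp_inj_to_nat_seg[OF fin] by blast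
  define g where "g = inv_into ?E f"
  define \<delta> where "\<delta> q a = f (lquot [a] (g q))" for q a
  define F where "F = f ` {K \<in> ?E. [] \<in> K}"
  have LE: "lquot x L \<in> ?E" if "x \<in> lists A" for x using that by (auto simp: quots_def)
  have gf: "g (f K) = K" if "K \<in> ?E" for K using that f(2) by (simp add: g_def)
  have run: "foldl \<delta> (f L) x = f (lquot x L)" if "x \<in> lists A" for x
    using that
  proof (induction x rule: rev_induct)
    case Nil then show ?case by simp
  next
    case (snoc a x)
    then have "x \<in> lists A" by simp
    then show ?case using snoc by (simp add: \<delta>_def gf[OF LE] lquot_append)
  qed
  have c1: "finite (f ` ?E)" using fin by simp
  have c2: "f L \<in> f ` ?E" using LE[of "[]"] by auto
  have c3: "F \<subseteq> f ` ?E" by (auto simp: F_def)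
  have c4: "\<forall>q\<in>f ` ?E. \<forall>a\<in>A. \<delta> q a \<in> f ` ?E"
    proof (intro ballI)
      fix q a assume "q \<in> f ` ?E" "a \<in> A"
      then obtain x where x: "x \<in> lists A" "q = f (lquot x L)" by (auto simp: quots_def)
      have "\<delta> q a = f (lquot (x @ [a]) L)" using x by (simp add: \<delta>_def gf[OF LE] lquot_append)
      then show "\<delta> q a \<in> f ` ?E" using LE[of "x @ [a]"] x \<open>a \<in> A\<close> by auto
    qed
  have c5: "L = {w \<in> lists A. foldl \<delta> (f L) w \<in> F}"
    proof (intro set_eqI iffI)
      fix w assume w: "w \<in> L"
      then have "w \<in> lists A" using sub by auto
      moreover have "[] \<in> lquot w L" using w by (simp add: lquot_def)
      ultimately show "w \<in> {w \<in> lists A. foldl \<delta> (f L) w \<in> F}"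
        using run LE by (auto simp: F_def)
    next
      fix w assume "w \<in> {w \<in> lists A. foldl \<delta> (f L) w \<in> F}"
      then have w1: "w \<in> lists A" "foldl \<delta> (f L) w \<in> F" by auto
      then have w: "w \<in> lists A" "f (lquot w L) \<in> F" using run[OF w1(1)] by auto
      then obtain K where "K \<in> ?E" "[] \<in> K" "f (lquot w L) = f K" by (auto simp: F_def)
      then have "K = lquot w L" using f(2) LE[OF w(1)] by (auto dest: inj_onD)
      then show "w \<in> L" using \<open>[] \<in> K\<close> by (simp add: lquot_def)
    qed
  show ?thesis unfolding regular_def using c1 c2 c3 c4 c5 sub by blast
qed

lemma regular_iff_quots: "regular A L \<longleftrightarrow> L \<subseteq> lists A \<and> finite (quots A L)"
  using regular_imp_quots quots_imp_regular by blast

lemma regular_by_data: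
  assumes "L \<subseteq> lists A" and "finite D" and "\<And>x. x \<in> lists A \<Longrightarrow> \<exists>d\<in>D. lquot x L = H d"
  shows "regular A L"
proof -
  have "quots A L \<subseteq> H ` D" using assms(3) by (force simp: quots_def)
  then have "finite (quots A L)" using assms(2) finite_surj by blast
  then show ?thesis using assms(1) by (auto simp: regular_iff_quots)
qed

lemma regular_sub: "regular A L \<Longrightarrow> L \<subseteq> lists A"
  by (simp add: regular_def)

lemma regular_lquot: assumes "regular A L" shows "regular A (lquot x L)"
proof -
  have fin: "finite (quots A L)" and sub: "L \<subseteq> lists A" using assms by (auto simp: regular_iff_quots)
  show ?thesis
  proof (rule regular_by_data[where D = "insert {} (quots A L)" and H = id])
    show "lquot x L \<subseteq> lists A" using sub by (auto simp: lquot_def)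
    show "finite (insert {} (quots A L))" using fin by simp
    fix y assume y: "y \<in> lists A"
    show "\<exists>d\<in>insert {} (quots A L). lquot y (lquot x L) = id d"
    proof (cases "x \<in> lists A")
      case True
      then have "x @ y \<in> lists A" using y by simp
      then have "lquot (x@y) L \<in> quots A L" unfolding quots_def by blast
      then show ?thesis by (auto simp: lquot_append[symmetric])
    next
      case False
      then have "lquot y (lquot x L) = {}" using sub by (auto simp: lquot_def)
      then show ?thesis by auto
    qed
  qed
qed

lemma regular_Int: assumes "regular A L1" "regular A L2" shows "regular A (L1 \<inter> L2)"
proof (rule regular_by_data[where D = "quots A L1 \<times> quots A L2" and H = "\<lambda>(a,b). a \<inter> b"])
  show "L1 \<inter> L2 \<subseteq> lists A" using assms regular_sub by blast
  show "finite (quots A L1 \<times> quots A L2)" using assms by (auto simp: regular_iff_quots)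
  fix x assume "x \<in> lists A"
  then show "\<exists>d\<in>quots A L1 \<times> quots A L2. lquot x (L1 \<inter> L2) = (case d of (a, b) \<Rightarrow> a \<inter> b)"
    by (auto simp: quots_def lquot_def intro!: bexI[of _ "(lquot x L1, lquot x L2)"])
qed

lemma regular_Un: assumes "regular A L1" "regular A L2" shows "regular A (L1 \<union> L2)"
proof (rule regular_by_data[where D = "quots A L1 \<times> quots A L2" and H = "\<lambda>(a,b). a \<union> b"])
  show "L1 \<union> L2 \<subseteq> lists A" using assms regular_sub by blast
  show "finite (quots A L1 \<times> quots A L2)" using assms by (auto simp: regular_iff_quots)
  fix x assume "x \<in> lists A"
  then show "\<exists>d\<in>quots A L1 \<times> quots A L2. lquot x (L1 \<union> L2) = (case d of (a, b) \<Rightarrow> a \<union> b)"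
    by (auto simp: quots_def lquot_def intro!: bexI[of _ "(lquot x L1, lquot x L2)"])
qed

lemma regular_empty: "regular A {}"
  by (rule regular_by_data[where D = "{()}" and H = "\<lambda>_. {}"]) (auto simp: lquot_def)

lemma regular_UN: assumes "finite I" "\<And>i. i \<in> I \<Longrightarrow> regular A (L i)" shows "regular A (\<Union>i\<in>I. L i)"
  using assms by (induction I rule: finite_induct) (auto intro: regular_Un regular_empty)

abbreviation pr :: "'a set \<Rightarrow> 'a list \<Rightarrow> 'a list" where
  "pr X w \<equiv> filter (\<lambda>x. x \<in> X) w"

lemma finite_shifts[simp]: "finite (shifts X w)"
  by (rule finite_subset[of _ "{..<length w}"]) (auto simp: shifts_def)

lemma shifts_append_sup: "(\<lambda>i. i + length y) ` shifts X z \<subseteq> shifts X (y @ z)"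
proof
  fix k assume "k \<in> (\<lambda>i. i + length y) ` shifts X z"
  then obtain i where i: "i \<in> shifts X z" "k = i + length y" by auto
  then have i1: "1 \<le> i" "i < length z" "(z ! (i - 1) \<in> X) \<noteq> (z ! i \<in> X)" by (auto simp: shifts_def)
  have "k - 1 = (i - 1) + length y" using i1 i(2) by simp
  then have "(y @ z) ! (k - 1) = z ! (i - 1)" by (simp add: nth_append)
  moreover have "(y @ z) ! k = z ! i" using i(2) by (simp add: nth_append)
  ultimately show "k \<in> shifts X (y @ z)" using i1 i(2) by (auto simp: shifts_def)
qed

lemma shift_append_ge: "shift X z \<le> shift X (y @ z)"
proof -
  have "card ((\<lambda>i. i + length y) ` shifts X z) = card (shifts X z)"
    by (rule card_image) (auto simp: inj_on_def)
  moreover have "card ((\<lambda>i. i + length y) ` shifts X z) \<le> card (shifts X (y @ z))"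
    by (rule card_mono[OF finite_shifts shifts_append_sup])
  ultimately show ?thesis by (simp add: shift_def)
qed

lemma shift_block:
  assumes b: "b \<in> lists X" "b \<noteq> []" and r: "r \<noteq> []" "hd r \<notin> X"
  shows "Suc (shift X r) \<le> shift X (b @ r)"
proof -
  have "length b \<in> shifts X (b @ r)"
  proof -
    have "(b @ r) ! (length b - 1) = last b" using b by (simp add: nth_append last_conv_nth)
    moreover have "last b \<in> X" using b by auto
    moreover have "(b @ r) ! length b = hd r" using r by (simp add: nth_append hd_conv_nth)
    ultimately show ?thesis using b r by (auto simp: shifts_def Suc_le_eq)
  qed
  moreover have "length b \<notin> (\<lambda>i. i + length b) ` shifts X r" by (auto simp: shifts_def)
  ultimately have "insert (length b) ((\<lambda>i. i + length b) ` shifts X r) \<subseteq> shifts X (b @ r)"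
    using shifts_append_sup by blast
  then have "card (insert (length b) ((\<lambda>i. i + length b) ` shifts X r)) \<le> shift X (b @ r)"
    unfolding shift_def by (rule card_mono[OF finite_shifts])
  moreover have "card (insert (length b) ((\<lambda>i. i + length b) ` shifts X r)) = Suc (shift X r)"
    using \<open>length b \<notin> _\<close> by (simp add: card_image inj_on_def shift_def)
  ultimately show ?thesis by simp
qed

lemma shifts_swap:
  assumes "w \<in> lists (X \<union> Y)" "X \<inter> Y = {}" shows "shifts Y w = shifts X w"
proof -
  have "\<And>i. i < length w \<Longrightarrow> (w ! i \<in> Y) = (w ! i \<notin> X)"
    using assms by (auto dest!: nth_mem)
  then show ?thesis unfolding shifts_def by (intro Collect_cong) (metis less_imp_diff_less)
qed

definition conc :: "'a list set \<Rightarrow> 'a list set \<Rightarrow> 'a list set" where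
  "conc L1 L2 = {a @ b | a b. a \<in> L1 \<and> b \<in> L2}"

lemma lquot_conc:
  "lquot x (conc L1 L2) = conc (lquot x L1) L2 \<union> \<Union>{lquot x2 L2 | x1 x2. x = x1 @ x2 \<and> x1 \<in> L1}"
proof (intro set_eqI iffI)
  fix z assume "z \<in> lquot x (conc L1 L2)"
  then obtain a b where ab: "x @ z = a @ b" "a \<in> L1" "b \<in> L2" by (auto simp: lquot_def conc_def)
  from ab(1) obtain us where "x = a @ us \<and> us @ z = b \<or> x @ us = a \<and> z = us @ b"
    by (auto simp: append_eq_append_conv2)
  then show "z \<in> conc (lquot x L1) L2 \<union> \<Union>{lquot x2 L2 | x1 x2. x = x1 @ x2 \<and> x1 \<in> L1}"
  proof
    assume h: "x = a @ us \<and> us @ z = b"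
    then have "z \<in> lquot us L2" using ab by (auto simp: lquot_def)
    then show ?thesis using h ab by blast
  next
    assume h: "x @ us = a \<and> z = us @ b"
    then have "us \<in> lquot x L1" using ab by (auto simp: lquot_def)
    then show ?thesis using h ab by (auto simp: conc_def)
  qed
next
  fix z assume "z \<in> conc (lquot x L1) L2 \<union> \<Union>{lquot x2 L2 | x1 x2. x = x1 @ x2 \<and> x1 \<in> L1}"
  then show "z \<in> lquot x (conc L1 L2)"
    by (auto simp: lquot_def conc_def) (metis append.assoc)+
qed

lemma regular_conc: assumes "regular A L1" "regular A L2" shows "regular A (conc L1 L2)"
proof (rule regular_by_data[where D = "quots A L1 \<times> Pow (quots A L2)" and H = "\<lambda>(K,S). conc K L2 \<union> \<Union>S"])
  show "conc L1 L2 \<subseteq> lists A" using assms regular_sub by (fastforce simp: conc_def)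
  show "finite (quots A L1 \<times> Pow (quots A L2))" using assms by (auto simp: regular_iff_quots)
  fix x assume x: "x \<in> lists A"
  let ?S = "{lquot x2 L2 | x1 x2. x = x1 @ x2 \<and> x1 \<in> L1}"
  have "?S \<subseteq> quots A L2" using x by (auto simp: quots_def)
  moreover have "lquot x L1 \<in> quots A L1" using x by (auto simp: quots_def)
  ultimately show "\<exists>d\<in>quots A L1 \<times> Pow (quots A L2). lquot x (conc L1 L2) = (case d of (K, S) \<Rightarrow> conc K L2 \<union> \<Union>S)"
    by (intro bexI[of _ "(lquot x L1, ?S)"]) (auto simp: lquot_conc)
qed

lemma regular_Nil: "regular A {[]}"
proof (rule regular_by_data[where D = "{{[]}, {}}" and H = id])
  fix x show "\<exists>d\<in>{{[]}, {}}. lquot x {[]} = id d" by (cases x) (auto simp: lquot_def)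
qed auto

definition decomp :: "'a set \<Rightarrow> 'a set \<Rightarrow> 'a list set \<Rightarrow> ('a list set \<times> 'a list set) set \<Rightarrow> bool" where
  "decomp X Y Q I \<longleftrightarrow> finite I \<and> (\<forall>p\<in>I. regular X (fst p) \<and> regular Y (snd p)) \<and>
     semL X Y Q = (\<Union>p\<in>I. fst p \<times> snd p)"

definition nblocks :: "'a set \<Rightarrow> 'a list \<Rightarrow> nat" where
  "nblocks X w = (if w = [] then 0 else Suc (shift X w))"

lemma pr_lists_id: "b \<in> lists X \<Longrightarrow> pr X b = b"
  by (induction b) auto

lemma pr_lists_disj: "b \<in> lists X \<Longrightarrow> X \<inter> Y = {} \<Longrightarrow> pr Y b = []"
  by (induction b) auto

lemma half:
  assumes disj: "X \<inter> Y = {}" and reg: "regular (X \<union> Y) Q" and bound: "\<forall>v\<in>Q. nblocks X v \<le> Suc N"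
    and IH: "\<forall>Q'. regular (X \<union> Y) Q' \<and> (\<forall>v\<in>Q'. nblocks X v \<le> N) \<longrightarrow> (\<exists>I. decomp X Y Q' I)"
  shows "\<exists>I. decomp X Y {v\<in>Q. v \<noteq> [] \<and> hd v \<in> X} I"
proof -
  define G0 where "G0 = {r \<in> lists (X \<union> Y). r = [] \<or> hd r \<notin> X}"
  have regG0: "regular (X \<union> Y) G0"
  proof (rule regular_by_data[where D = "{G0, lists (X \<union> Y), {}}" and H = id])
    show "G0 \<subseteq> lists (X \<union> Y)" by (auto simp: G0_def)
    show "finite {G0, lists (X \<union> Y), {}}" by simp
    fix x assume x: "x \<in> lists (X \<union> Y)"
    show "\<exists>d\<in>{G0, lists (X \<union> Y), {}}. lquot x G0 = id d"
    proof (cases x)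
      case Nil then show ?thesis by simp
    next
      case (Cons a x')
      show ?thesis
      proof (cases "a \<in> X")
        case True then show ?thesis using Cons by (auto simp: lquot_def G0_def)
      next
        case False then show ?thesis using Cons x by (auto simp: lquot_def G0_def)
      qed
    qed
  qed
  define Kf where "Kf b = lquot b Q \<inter> G0" for b
  define KK where "KK = Kf ` {b \<in> lists X. b \<noteq> []}"
  have finKK: "finite KK"
  proof -
    have "KK \<subseteq> (\<lambda>K. K \<inter> G0) ` quots (X \<union> Y) Q"
      by (auto simp: KK_def Kf_def quots_def)
    moreover have "finite (quots (X \<union> Y) Q)" using reg by (simp add: regular_iff_quots)
    ultimately show ?thesis using finite_surj by blast
  qed
  define Bs where "Bs K = {b \<in> lists X. b \<noteq> [] \<and> Kf b = K}" for K
  have regBs: "regular X (Bs K)" for K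
  proof (rule regular_by_data[where D = "quots (X \<union> Y) Q \<times> (UNIV :: bool set)"
        and H = "\<lambda>(K', e). {z \<in> lists X. (e \<or> z \<noteq> []) \<and> lquot z K' \<inter> G0 = K}"])
    show "Bs K \<subseteq> lists X" by (auto simp: Bs_def)
    show "finite (quots (X \<union> Y) Q \<times> (UNIV :: bool set))" using reg by (simp add: regular_iff_quots)
    fix y assume y: "y \<in> lists X"
    then have "y \<in> lists (X \<union> Y)" by auto
    then have "lquot y Q \<in> quots (X \<union> Y) Q" by (auto simp: quots_def)
    moreover have "lquot y (Bs K) = {z \<in> lists X. (y \<noteq> [] \<or> z \<noteq> []) \<and> lquot z (lquot y Q) \<inter> G0 = K}"
      using y by (auto simp: lquot_def Bs_def Kf_def)
    ultimately show "\<exists>d\<in>quots (X \<union> Y) Q \<times> UNIV. lquot y (Bs K) = (case d of (K', e) \<Rightarrow> {z \<in> lists X. (e \<or> z \<noteq> []) \<and> lquot z K' \<inter> G0 = K})"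
      by (intro bexI[of _ "(lquot y Q, y \<noteq> [])"]) auto
  qed
  have "\<forall>K\<in>KK. \<exists>I. decomp X Y K I"
  proof
    fix K assume "K \<in> KK"
    then obtain b where b: "b \<in> lists X" "b \<noteq> []" "K = Kf b" by (auto simp: KK_def)
    have "regular (X \<union> Y) K" unfolding b(3) Kf_def by (intro regular_Int regular_lquot reg regG0)
    moreover have "\<forall>v\<in>K. nblocks X v \<le> N"
    proof
      fix r assume r: "r \<in> K"
      then have "b @ r \<in> Q" "r = [] \<or> hd r \<notin> X" by (auto simp: b Kf_def lquot_def G0_def)
      show "nblocks X r \<le> N"
      proof (cases "r = []")
        case True then show ?thesis by (simp add: nblocks_def)
      next
        case False
        then have "Suc (shift X r) \<le> shift X (b @ r)" using shift_block[OF b(1,2) False] \<open>r = [] \<or> _\<close> by auto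
        moreover have "nblocks X (b @ r) \<le> Suc N" using bound \<open>b @ r \<in> Q\<close> by auto
        ultimately show ?thesis using False b(2) by (simp add: nblocks_def)
      qed
    qed
    ultimately show "\<exists>I. decomp X Y K I" using IH by blast
  qed
  then obtain f where f: "\<forall>K\<in>KK. decomp X Y K (f K)" by metis
  define I where "I = (\<Union>K\<in>KK. (\<lambda>p. (conc (Bs K) (fst p), snd p)) ` f K)"
  have "decomp X Y {v\<in>Q. v \<noteq> [] \<and> hd v \<in> X} I"
    unfolding decomp_def
  proof (intro conjI)
    show "finite I" using finKK f by (auto simp: I_def decomp_def)
    show "\<forall>p\<in>I. regular X (fst p) \<and> regular Y (snd p)"
      using f regBs by (auto simp: I_def decomp_def intro!: regular_conc)
    show "semL X Y {v \<in> Q. v \<noteq> [] \<and> hd v \<in> X} = (\<Union>p\<in>I. fst p \<times> snd p)"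
    proof (intro set_eqI iffI)
      fix ab assume "ab \<in> semL X Y {v \<in> Q. v \<noteq> [] \<and> hd v \<in> X}"
      then obtain v where v: "v \<in> Q" "v \<noteq> []" "hd v \<in> X" "ab = sem X Y v" by (auto simp: semL_def)
      define b where "b = takeWhile (\<lambda>x. x \<in> X) v"
      define r where "r = dropWhile (\<lambda>x. x \<in> X) v"
      have vbr: "v = b @ r" by (simp add: b_def r_def)
      have bX: "b \<in> lists X" by (auto simp: b_def dest: set_takeWhileD)
      have bne: "b \<noteq> []" using v(2,3) by (cases v) (auto simp: b_def)
      have vl: "v \<in> lists (X \<union> Y)" using v(1) reg regular_sub by blast
      have rG: "r \<in> G0" using vl hd_dropWhile[of "\<lambda>x. x \<in> X" v]
        by (auto simp: G0_def r_def dest: set_dropWhileD)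
      have rK: "r \<in> Kf b" using rG v(1) vbr by (auto simp: Kf_def lquot_def)
      have KK: "Kf b \<in> KK" using bX bne by (auto simp: KK_def)
      have bB: "b \<in> Bs (Kf b)" using bX bne by (auto simp: Bs_def)
      have "(pr X r, pr Y r) \<in> semL X Y (Kf b)" using rK by (auto simp: semL_def sem_def)
      then obtain p where p: "p \<in> f (Kf b)" "pr X r \<in> fst p" "pr Y r \<in> snd p"
        using f KK by (auto simp: decomp_def)
      have ab: "ab = (b @ pr X r, pr Y r)"
        using v(4) vbr pr_lists_id[OF bX] pr_lists_disj[OF bX disj] by (simp add: sem_def)
      have "(conc (Bs (Kf b)) (fst p), snd p) \<in> I" using KK p(1) by (auto simp: I_def)
      moreover have "ab \<in> conc (Bs (Kf b)) (fst p) \<times> snd p" using ab bB p by (auto simp: conc_def)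
      ultimately show "ab \<in> (\<Union>p\<in>I. fst p \<times> snd p)" by (intro UN_I[of "(conc (Bs (Kf b)) (fst p), snd p)"]) auto
    next
      fix ab assume "ab \<in> (\<Union>p\<in>I. fst p \<times> snd p)"
      then obtain K p where K: "K \<in> KK" "p \<in> f K" "ab \<in> conc (Bs K) (fst p) \<times> snd p"
        by (auto simp: I_def)
      then obtain b \<alpha> where b: "b \<in> Bs K" "\<alpha> \<in> fst p" "fst ab = b @ \<alpha>" "snd ab \<in> snd p"
        by (auto simp: conc_def)
      have "(\<alpha>, snd ab) \<in> semL X Y K" using f K(1,2) b(2,4) by (auto simp: decomp_def)
      then obtain r where r: "r \<in> K" "pr X r = \<alpha>" "pr Y r = snd ab" by (auto simp: semL_def sem_def)
      have bX: "b \<in> lists X" "b \<noteq> []" "Kf b = K" using b(1) by (auto simp: Bs_def)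
      have "b @ r \<in> Q" using r(1) bX(3) by (auto simp: Kf_def lquot_def)
      moreover have "hd (b @ r) \<in> X" using bX by (cases b) auto
      moreover have "sem X Y (b @ r) = ab"
        using r b(3) pr_lists_id[OF bX(1)] pr_lists_disj[OF bX(1) disj] by (cases ab) (simp add: sem_def)
      ultimately show "ab \<in> semL X Y {v \<in> Q. v \<noteq> [] \<and> hd v \<in> X}"
        using bX(2) unfolding semL_def by (intro image_eqI[of _ _ "b @ r"]) auto
    qed
  qed
  then show ?thesis by blast
qed

lemma decomp_Un: "decomp X Y A I1 \<Longrightarrow> decomp X Y B I2 \<Longrightarrow> decomp X Y (A \<union> B) (I1 \<union> I2)"
  by (auto simp: decomp_def semL_def image_Un)

lemma decomp_swap: assumes "decomp Y X Q I" shows "decomp X Y Q ((\<lambda>p. (snd p, fst p)) ` I)"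
proof -
  have e: "(\<lambda>w. (pr Y w, pr X w)) ` Q = (\<Union>p\<in>I. fst p \<times> snd p)" and f: "finite I"
    and r: "\<forall>p\<in>I. regular Y (fst p) \<and> regular X (snd p)"
    using assms by (auto simp: decomp_def semL_def sem_def)
  have "(\<lambda>w. (pr X w, pr Y w)) ` Q = (\<lambda>(a,b). (b,a)) ` ((\<lambda>w. (pr Y w, pr X w)) ` Q)"
    by (auto simp: image_image)
  also have "\<dots> = (\<Union>p\<in>(\<lambda>p. (snd p, fst p)) ` I. fst p \<times> snd p)" unfolding e by auto
  finally show ?thesis using f r by (auto simp: decomp_def semL_def sem_def)
qed

lemma decomp_empty: "decomp X Y {} {}"
  by (auto simp: decomp_def semL_def)

lemma decomp_Nil: "decomp X Y (Q \<inter> {[]}) (if [] \<in> Q then {({[]},{[]})} else {})"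
  by (auto simp: decomp_def semL_def sem_def regular_Nil)

lemma rec_aux:
  "\<forall>X Y Q. X \<inter> Y = {} \<and> regular (X \<union> Y) Q \<and> (\<forall>v\<in>Q. nblocks X v \<le> N) \<longrightarrow> (\<exists>I. decomp X Y Q I)"
proof (induction N)
  case 0
  show ?case
  proof (intro allI impI)
    fix X Y :: "'a set" and Q assume h: "X \<inter> Y = {} \<and> regular (X \<union> Y) Q \<and> (\<forall>v\<in>Q. nblocks X v \<le> 0)"
    then have "Q = Q \<inter> {[]}" by (auto simp: nblocks_def split: if_splits)
    then show "\<exists>I. decomp X Y Q I" using decomp_Nil by metis
  qed
next
  case (Suc N)
  show ?case
  proof (intro allI impI)
    fix X Y :: "'a set" and Q assume h: "X \<inter> Y = {} \<and> regular (X \<union> Y) Q \<and> (\<forall>v\<in>Q. nblocks X v \<le> Suc N)"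
    then have disj: "X \<inter> Y = {}" and reg: "regular (X \<union> Y) Q" and bd: "\<forall>v\<in>Q. nblocks X v \<le> Suc N" by auto
    have sub: "Q \<subseteq> lists (X \<union> Y)" using reg regular_sub by blast
    obtain I1 where I1: "decomp X Y {v\<in>Q. v \<noteq> [] \<and> hd v \<in> X} I1"
      using half[OF disj reg bd] Suc.IH disj by blast
    have reg': "regular (Y \<union> X) Q" using reg by (simp add: Un_commute)
    have nbs: "nblocks Y v = nblocks X v" if "v \<in> Q" for v
    proof -
      have "v \<in> lists (X \<union> Y)" using that sub by blast
      then have "shifts Y v = shifts X v" by (rule shifts_swap[OF _ disj])
      then show ?thesis unfolding nblocks_def shift_def by simp
    qed
    have bd': "\<forall>v\<in>Q. nblocks Y v \<le> Suc N" using bd nbs by auto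
    have disj': "Y \<inter> X = {}" using disj by auto
    have IH': "\<forall>Q'. regular (Y \<union> X) Q' \<and> (\<forall>v\<in>Q'. nblocks Y v \<le> N) \<longrightarrow> (\<exists>I. decomp Y X Q' I)"
      using Suc.IH disj' by blast
    obtain I2 where I2: "decomp Y X {v\<in>Q. v \<noteq> [] \<and> hd v \<in> Y} I2"
      using half[OF disj' reg' bd' IH'] by blast
    have "Q = (Q \<inter> {[]}) \<union> {v\<in>Q. v \<noteq> [] \<and> hd v \<in> X} \<union> {v\<in>Q. v \<noteq> [] \<and> hd v \<in> Y}"
    proof -
      have "hd v \<in> X \<or> hd v \<in> Y" if "v \<in> Q" "v \<noteq> []" for v
        using that sub by (cases v) auto
      then show ?thesis by blast
    qed
    moreover have "decomp X Y ((Q \<inter> {[]}) \<union> {v\<in>Q. v \<noteq> [] \<and> hd v \<in> X} \<union> {v\<in>Q. v \<noteq> [] \<and> hd v \<in> Y})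
       ((if [] \<in> Q then {({[]},{[]})} else {}) \<union> I1 \<union> (\<lambda>p. (snd p, fst p)) ` I2)"
      by (intro decomp_Un decomp_Nil I1 decomp_swap[OF I2])
    ultimately show "\<exists>I. decomp X Y Q I" by metis
  qed
qed

lemma rec_lemma:
  assumes "X \<inter> Y = {}" "regular (X \<union> Y) Q" "\<forall>v\<in>Q. shift X v \<le> B"
  shows "\<exists>I. decomp X Y Q I"
proof -
  have "\<forall>v\<in>Q. nblocks X v \<le> Suc B" using assms(3) by (auto simp: nblocks_def)
  then show ?thesis using rec_aux[of "Suc B"] assms(1,2) by blast
qed

definition slag :: "'a set \<Rightarrow> 'a set \<Rightarrow> 'a list \<Rightarrow> int" where
  "slag X Y w = int (length (pr X w)) - int (length (pr Y w))"

lemma slag_append[simp]: "slag X Y (x @ y) = slag X Y x + slag X Y y"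
  by (simp add: slag_def)

lemma slag_Nil[simp]: "slag X Y [] = 0" by (simp add: slag_def)

lemma slag_swap: "slag Y X w = - slag X Y w" by (simp add: slag_def)

lemma slag_abs_le: "\<bar>slag X Y w\<bar> \<le> int (length w)"
proof -
  have "length (pr X w) \<le> length w" "length (pr Y w) \<le> length w" by (auto simp: length_filter_le)
  then show ?thesis unfolding slag_def by linarith
qed

lemma slag_single: "X \<inter> Y = {} \<Longrightarrow> \<bar>slag X Y [a]\<bar> \<le> 1"
  by (auto simp: slag_def)

lemma lagged_slag: "lagged X Y w i k \<longleftrightarrow> \<bar>slag X Y (take i w)\<bar> \<ge> int k"
  by (simp add: lagged_def slag_def)

lemma slag_ivt:
  assumes disj: "X \<inter> Y = {}"
  shows "0 \<le> l \<Longrightarrow> l \<le> slag X Y w \<Longrightarrow> \<exists>p\<le>length w. slag X Y (take p w) = l"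
proof (induction w arbitrary: l rule: rev_induct)
  case Nil then show ?case by auto
next
  case (snoc a w)
  show ?case
  proof (cases "l \<le> slag X Y w")
    case True
    then obtain p where "p \<le> length w" "slag X Y (take p w) = l" using snoc by blast
    then show ?thesis by (intro exI[of _ p]) auto
  next
    case False
    have "\<bar>slag X Y [a]\<bar> \<le> 1" using slag_single[OF disj] .
    moreover have "slag X Y (w @ [a]) = slag X Y w + slag X Y [a]" by simp
    ultimately have "l = slag X Y (w @ [a])" using False snoc.prems(2) by (simp add: abs_le_iff)
    then show ?thesis by (intro exI[of _ "length (w @ [a])"]) auto
  qed
qed

lemma card_factor:
  assumes "finite P" "\<forall>p\<in>P. \<forall>p'\<in>P. g p = g p' \<longrightarrow> s p = s p'"
  shows "card (s ` P) \<le> card (g ` P)"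
proof -
  define f where "f K = s (SOME p. p \<in> P \<and> g p = K)" for K
  have fs: "s p = f (g p)" if p: "p \<in> P" for p
  proof -
    have "\<exists>q. q \<in> P \<and> g q = g p" using p by blast
    then have "(SOME q. q \<in> P \<and> g q = g p) \<in> P \<and> g (SOME q. q \<in> P \<and> g q = g p) = g p" by (rule someI_ex)
    then show "s p = f (g p)" using assms(2) p unfolding f_def by metis
  qed
  have "s ` P = f ` (g ` P)"
    unfolding image_image using fs by (intro image_cong) auto
  then show ?thesis using card_image_le[OF finite_imageI[OF assms(1)], of f g] by simp
qed

lemma lquot_pow:
  assumes "lquot (x1 @ x2) T = lquot x1 T"
  shows "lquot (x1 @ concat (replicate n x2)) T = lquot x1 T"
proof (induction n)
  case 0 then show ?case by simp
next
  case (Suc n)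
  have "lquot (x1 @ concat (replicate (Suc n) x2)) T = lquot ((x1 @ x2) @ concat (replicate n x2)) T"
    by simp
  also have "\<dots> = lquot (concat (replicate n x2)) (lquot (x1 @ x2) T)" by (rule lquot_append)
  also have "\<dots> = lquot (x1 @ concat (replicate n x2)) T" by (subst assms) (rule lquot_append[symmetric])
  finally show ?case using Suc by simp
qed

lemma slag_pow: "slag X Y (concat (replicate n x)) = int n * slag X Y x"
  by (induction n) (auto simp: algebra_simps)

lemma shiftlag_ge:
  assumes "has_shiftlag X Y w m" shows "m \<le> shiftlag X Y w"
proof -
  have "{n. has_shiftlag X Y w n} \<subseteq> {..length w}"
  proof
    fix n assume "n \<in> {n. has_shiftlag X Y w n}"
    then obtain a b where ab: "card {p \<in> shifts X w. a \<le> p \<and> p \<le> b} = n"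
      by (auto simp: has_shiftlag_def)
    have "card {p \<in> shifts X w. a \<le> p \<and> p \<le> b} \<le> card {..<length w}"
      by (rule card_mono) (auto simp: shifts_def)
    then show "n \<in> {..length w}" using ab by simp
  qed
  then have "finite {n. has_shiftlag X Y w n}" using finite_subset by blast
  then show ?thesis using assms unfolding shiftlag_def by (simp add: Max_ge)
qed

lemma shifts_window:
  "{p \<in> shifts X (P @ z). length P + 1 \<le> p \<and> p \<le> length P + length z} = (\<lambda>i. i + length P) ` shifts X z"
proof (intro set_eqI iffI)
  fix p assume p: "p \<in> {p \<in> shifts X (P @ z). length P + 1 \<le> p \<and> p \<le> length P + length z}"
  define s where "s = p - length P"
  have ps: "p = s + length P" "1 \<le> s" using p by (auto simp: s_def)
  have "s < length z" using p ps by (auto simp: shifts_def)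
  moreover have "(P @ z) ! (p - 1) = z ! (s - 1)"
  proof -
    have "p - 1 = (s - 1) + length P" using ps by simp
    then show ?thesis by (simp add: nth_append)
  qed
  moreover have "(P @ z) ! p = z ! s" using ps by (simp add: nth_append)
  ultimately have "s \<in> shifts X z" using p ps by (auto simp: shifts_def)
  then show "p \<in> (\<lambda>i. i + length P) ` shifts X z" using ps by auto
next
  fix p assume "p \<in> (\<lambda>i. i + length P) ` shifts X z"
  then obtain i where i: "i \<in> shifts X z" "p = i + length P" by blast
  have "p \<in> shifts X (P @ z)" using shifts_append_sup[of P X z] i by blast
  moreover have "1 \<le> i" "i < length z" using i(1) unfolding shifts_def by auto
  ultimately show "p \<in> {p \<in> shifts X (P @ z). length P + 1 \<le> p \<and> p \<le> length P + length z}"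
    using i(2) by simp
qed

lemma shiftlag_big_prefix:
  assumes "\<bar>slag X Y P\<bar> \<ge> int (shift X z + length z)"
  shows "shift X z \<le> shiftlag X Y (P @ z)"
proof -
  let ?m = "shift X z"
  have card: "card {p \<in> shifts X (P @ z). length P + 1 \<le> p \<and> p \<le> length P + length z} = ?m"
    unfolding shifts_window shift_def by (simp add: card_image inj_on_def)
  have "has_shiftlag X Y (P @ z) ?m"
    unfolding has_shiftlag_def
  proof (rule exI[of _ "length P + 1"], rule exI[of _ "length P + length z"], intro conjI ballI impI)
    show "card {p \<in> shifts X (P @ z). length P + 1 \<le> p \<and> p \<le> length P + length z} = ?m"
      by (rule card)
    fix p assume p: "p \<in> shifts X (P @ z)" "length P + 1 \<le> p \<and> p \<le> length P + length z"
    then have "p \<in> (\<lambda>i. i + length P) ` shifts X z" using shifts_window by blast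
    then obtain s where s: "s \<in> shifts X z" "p = s + length P" by auto
    have "take p (P @ z) = P @ take s z" using s by simp
    then have "slag X Y (take p (P @ z)) = slag X Y P + slag X Y (take s z)" by simp
    moreover have "\<bar>slag X Y (take s z)\<bar> \<le> int (length z)"
      using slag_abs_le[of X Y "take s z"] by simp
    ultimately show "lagged X Y (P @ z) p ?m" using assms unfolding lagged_slag by linarith
  qed
  then show ?thesis by (rule shiftlag_ge)
qed


lemma slag_range:
  assumes disj: "X \<inter> Y = {}"
  shows "{0..slag X Y w} \<union> {slag X Y w..0} \<subseteq> (\<lambda>p. slag X Y (take p w)) ` {0..length w}"
proof
  fix l assume l: "l \<in> {0..slag X Y w} \<union> {slag X Y w..0}"
  show "l \<in> (\<lambda>p. slag X Y (take p w)) ` {0..length w}"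
  proof (cases "0 \<le> l \<and> l \<le> slag X Y w")
    case True
    then obtain p where p: "p \<le> length w" "slag X Y (take p w) = l"
      using slag_ivt[OF disj, of l w] by blast
    show ?thesis by (rule image_eqI[of _ _ p]) (use p in auto)
  next
    case False
    then have h1: "0 \<le> -l" "-l \<le> slag Y X w" using l unfolding slag_swap[of Y X] by auto
    have "Y \<inter> X = {}" using disj by auto
    from slag_ivt[OF this h1] obtain p where p: "p \<le> length w" "slag Y X (take p w) = -l" by blast
    then have "slag X Y (take p w) = l" unfolding slag_swap[of Y X] by simp
    show ?thesis by (rule image_eqI[of _ _ p]) (use p \<open>slag X Y (take p w) = l\<close> in auto)
  qed
qed

lemma pumping:
  assumes disj: "Sig \<inter> Gam = {}" and reg: "regular (Sig \<union> Gam) T" and fsl: "finite_shiftlag Sig Gam T"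
  shows "\<exists>C N. \<forall>x z. x @ z \<in> T \<and> int C \<le> \<bar>slag Sig Gam x\<bar> \<longrightarrow> shift Sig z \<le> N"
proof -
  obtain Nm where Nm: "\<forall>w\<in>T. shiftlag Sig Gam w \<le> Nm" using fsl by (auto simp: finite_shiftlag_def)
  let ?A = "Sig \<union> Gam"
  define C where "C = card (quots ?A T)"
  have finQ: "finite (quots ?A T)" using reg by (simp add: regular_iff_quots)
  have "\<forall>x z. x @ z \<in> T \<and> int C \<le> \<bar>slag Sig Gam x\<bar> \<longrightarrow> shift Sig z \<le> Nm"
  proof (intro allI impI)
    fix x z assume h: "x @ z \<in> T \<and> int C \<le> \<bar>slag Sig Gam x\<bar>"
    have "x @ z \<in> lists ?A" using h regular_sub[OF reg] by blast
    then have xA: "x \<in> lists ?A" by simp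
    define s where "s p = slag Sig Gam (take p x)" for p
    define g where "g p = lquot (take p x) T" for p
    let ?P = "{0..length x}"
    have "\<exists>p p'. p < p' \<and> p' \<le> length x \<and> g p = g p' \<and> s p \<noteq> s p'"
    proof (rule ccontr)
      assume nex: "\<not> (\<exists>p p'. p < p' \<and> p' \<le> length x \<and> g p = g p' \<and> s p \<noteq> s p')"
      have "\<forall>p\<in>?P. \<forall>p'\<in>?P. g p = g p' \<longrightarrow> s p = s p'"
      proof (intro ballI impI)
        fix p p' assume pP: "p \<in> ?P" "p' \<in> ?P" and gp: "g p = g p'"
        show "s p = s p'"
        proof (rule ccontr)
          assume ne: "s p \<noteq> s p'"
          then have "p \<noteq> p'" by blast
          then consider "p < p'" | "p' < p" by (meson linorder_neqE_nat)
          then show False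
          proof cases
            case 1
            have "p' \<le> length x" using pP by simp
            then show False using nex 1 gp ne by blast
          next
            case 2
            have "p \<le> length x" using pP by simp
            moreover have "g p' = g p" "s p' \<noteq> s p" using gp ne by auto
            ultimately show False using nex 2 by blast
          qed
        qed
      qed
      then have c1: "card (s ` ?P) \<le> card (g ` ?P)" by (rule card_factor[rotated]) simp
      have "g ` ?P \<subseteq> quots ?A T"
        using xA by (auto simp: g_def quots_def intro!: exI[of _ "take _ x"] dest: in_set_takeD)
      then have c2: "card (g ` ?P) \<le> C" unfolding C_def using finQ by (rule card_mono[rotated])
      have sub: "{0..slag Sig Gam x} \<union> {slag Sig Gam x..0} \<subseteq> s ` ?P"
        using slag_range[OF disj, of x] unfolding s_def .
      have fin: "finite (s ` ?P)" by simp
      have "nat \<bar>slag Sig Gam x\<bar> + 1 \<le> card (s ` ?P)"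
      proof (cases "0 \<le> slag Sig Gam x")
        case True
        have "card {0..slag Sig Gam x} \<le> card (s ` ?P)" using sub fin by (intro card_mono) auto
        then show ?thesis using True by simp
      next
        case False
        have "card {slag Sig Gam x..0} \<le> card (s ` ?P)" using sub fin by (intro card_mono) auto
        then show ?thesis using False by simp
      qed
      then show False using c1 c2 h by linarith
    qed
    then obtain p p' where pp: "p < p'" "p' \<le> length x" "g p = g p'" "s p \<noteq> s p'" by blast
    define x1 where "x1 = take p x"
    define x2 where "x2 = drop p (take p' x)"
    define x3 where "x3 = drop p' x"
    have tt: "take p (take p' x) = take p x" using pp(1) by (simp add: min_def)
    have tp': "take p' x = x1 @ x2"
      unfolding x1_def x2_def tt[symmetric] by (rule append_take_drop_id[symmetric])
    have "x = take p' x @ x3" unfolding x3_def by (rule append_take_drop_id[symmetric])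
    then have x123: "x = x1 @ x2 @ x3" unfolding tp' by simp
    have lq: "lquot (x1 @ x2) T = lquot x1 T" using pp(3) tp' by (simp add: g_def x1_def)
    define d where "d = slag Sig Gam x2"
    have d0: "d \<noteq> 0" using pp(4) tp' by (simp add: s_def d_def x1_def)
    define m where "m = shift Sig z"
    define n where "n = nat (\<bar>slag Sig Gam x1\<bar> + \<bar>slag Sig Gam x3\<bar>) + m + length z"
    define Pn where "Pn = x1 @ concat (replicate n x2) @ x3"
    have "x3 @ z \<in> lquot (x1 @ x2) T" using h x123 by (simp add: lquot_def)
    then have "x3 @ z \<in> lquot (x1 @ concat (replicate n x2)) T" using lquot_pow[OF lq, of n] lq by simp
    then have WT: "Pn @ z \<in> T" by (simp add: lquot_def Pn_def)
    have sPn: "slag Sig Gam Pn = slag Sig Gam x1 + int n * d + slag Sig Gam x3"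
      by (simp add: Pn_def slag_pow d_def)
    have "int n \<le> \<bar>int n * d\<bar>"
    proof -
      have "\<bar>int n * d\<bar> = int n * \<bar>d\<bar>" by (simp add: abs_mult)
      moreover have "int n * 1 \<le> int n * \<bar>d\<bar>" using d0 by (intro mult_left_mono) auto
      ultimately show ?thesis by simp
    qed
    then have "\<bar>slag Sig Gam Pn\<bar> \<ge> int (m + length z)" using sPn unfolding n_def by linarith
    then have "m \<le> shiftlag Sig Gam (Pn @ z)" using shiftlag_big_prefix unfolding m_def by blast
    then show "shift Sig z \<le> Nm" using Nm WT unfolding m_def by fastforce
  qed
  then show ?thesis by blast
qed

lemma len_split: "w \<in> lists (X \<union> Y) \<Longrightarrow> X \<inter> Y = {} \<Longrightarrow> length w = length (pr X w) + length (pr Y w)"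
  by (induction w) auto

lemma common_ext: "a @ p = b @ q \<Longrightarrow> (\<exists>t. b = a @ t) \<or> (\<exists>t. a = b @ t)"
  by (auto simp: append_eq_append_conv2)

lemma buf_eq:
  assumes "(\<exists>t. b = a @ t) \<or> (\<exists>t. a = b @ t)"
  shows "a @ drop (length a) b = b @ drop (length b) a"
    and "drop (length a) b = [] \<or> drop (length b) a = []"
  using assms by auto

lemma buf_iff:
  assumes "a @ t1 = b @ t2" "t1 = [] \<or> t2 = []"
  shows "a @ p = b @ q \<longleftrightarrow> t2 @ p = t1 @ q"
  using assms(2)
proof
  assume "t1 = []"
  then have "a = b @ t2" using assms(1) by simp
  then show ?thesis using \<open>t1 = []\<close> by simp
next
  assume "t2 = []"
  then have "b = a @ t1" using assms(1) by simp
  then show ?thesis using \<open>t2 = []\<close> by simp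
qed

lemma E_form:
  assumes "length p \<le> length q + C" "p \<in> lists X" "q \<in> lists X"
  shows "{\<sigma>. \<exists>\<alpha>\<in>U. p @ \<alpha> = q @ \<sigma>} \<in>
     {(\<lambda>\<alpha>. t @ \<alpha>) ` U | t. t \<in> lists X \<and> length t \<le> C} \<union> {lquot t U | t. t \<in> lists X} \<union> {{}}"
proof (cases "(\<exists>t. q = p @ t) \<or> (\<exists>t. p = q @ t)")
  case False
  then have "{\<sigma>. \<exists>\<alpha>\<in>U. p @ \<alpha> = q @ \<sigma>} = {}" using common_ext by blast
  then show ?thesis by blast
next
  case True
  then show ?thesis
  proof
    assume "\<exists>t. q = p @ t"
    then obtain t where t: "q = p @ t" by blast
    then have "{\<sigma>. \<exists>\<alpha>\<in>U. p @ \<alpha> = q @ \<sigma>} = lquot t U" by (auto simp: lquot_def)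
    moreover have "t \<in> lists X" using t assms(3) by simp
    ultimately show ?thesis by blast
  next
    assume "\<exists>t. p = q @ t"
    then obtain t where t: "p = q @ t" by blast
    then have "{\<sigma>. \<exists>\<alpha>\<in>U. p @ \<alpha> = q @ \<sigma>} = (\<lambda>\<alpha>. t @ \<alpha>) ` U" by auto
    moreover have "t \<in> lists X \<and> length t \<le> C" using t assms(1,2) by simp
    ultimately show ?thesis by blast
  qed
qed

lemma FS_mem:
  assumes "R \<in> {(\<lambda>\<alpha>. t @ \<alpha>) ` U | t. t \<in> lists X \<and> length t \<le> C} \<union> {lquot t U | t. t \<in> lists X} \<union> {{}}"
    and "U \<in> UU"
  shows "R \<in> {(\<lambda>\<alpha>. t @ \<alpha>) ` U | t U. U \<in> UU \<and> t \<in> {t. set t \<subseteq> X \<and> length t \<le> C}} \<union> (\<Union>U\<in>UU. quots X U) \<union> {{}}"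
proof -
  from assms(1) consider (a) t where "R = (\<lambda>\<alpha>. t @ \<alpha>) ` U" "t \<in> lists X" "length t \<le> C"
    | (b) t where "R = lquot t U" "t \<in> lists X" | (c) "R = {}" by blast
  then show ?thesis
  proof cases
    case a
    then have "t \<in> {t. set t \<subseteq> X \<and> length t \<le> C}" by auto
    then show ?thesis using a(1) assms(2) by blast
  next
    case b
    then have "R \<in> quots X U" unfolding quots_def by blast
    then show ?thesis using assms(2) by blast
  next
    case c then show ?thesis by blast
  qed
qed

context
  fixes Sig Gam :: "'a set" and T' :: "'a list set" and C B :: nat
begin

definition bl :: "'a list \<Rightarrow> bool" where
  "bl y \<longleftrightarrow> (\<forall>i. \<bar>slag Sig Gam (take i y)\<bar> \<le> int C)"

lemma bl_take: "bl y \<Longrightarrow> bl (take k y)"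
  unfolding bl_def by (metis take_take)

lemma bl_abs: "bl y \<Longrightarrow> \<bar>slag Sig Gam y\<bar> \<le> int C"
  unfolding bl_def by (metis take_all order_refl)

lemma bl_append:
  assumes "bl x" "\<forall>i\<le>k. \<bar>slag Sig Gam x + slag Sig Gam (take i z)\<bar> \<le> int C"
  shows "bl (x @ take k z)"
  unfolding bl_def
proof
  fix i
  show "\<bar>slag Sig Gam (take i (x @ take k z))\<bar> \<le> int C"
  proof (cases "i \<le> length x")
    case True
    then have "i - length x = 0" by simp
    then have eq: "take i (x @ take k z) = take i x" by simp
    show ?thesis unfolding eq using assms(1) unfolding bl_def by blast
  next
    case False
    then have "take i (x @ take k z) = x @ take (min (i - length x) k) z" by (simp add: min_def)
    moreover have "min (i - length x) k \<le> k" by simp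
    ultimately show ?thesis using assms(2) by simp
  qed
qed

lemma bl_append_inv:
  assumes "bl (x @ take k z)" "i \<le> k"
  shows "\<bar>slag Sig Gam x + slag Sig Gam (take i z)\<bar> \<le> int C"
proof -
  have "take (length x + i) (x @ take k z) = x @ take i z" using assms(2) by (simp add: min_def)
  then show ?thesis using assms(1) unfolding bl_def by (metis slag_append)
qed

definition Yl :: "'a list set" where
  "Yl = {w \<in> lists (Sig \<union> Gam). \<exists>w'\<in>T'. \<exists>j\<le>length w. sem Sig Gam w' = sem Sig Gam w \<and>
      bl (take j w) \<and> bl (take j w') \<and> (j = length w \<or> (\<forall>v\<in>lquot (take j w') T'. shift Sig v \<le> B))}"

definition contS :: "'a list set \<times> 'a list \<times> 'a list \<times> 'a list \<times> 'a list \<times> int \<times> int \<Rightarrow> 'a list set" where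
  "contS \<delta> = (case \<delta> of (Q, t1S, t2S, t1G, t2G, l, l') \<Rightarrow>
     {z \<in> lists (Sig \<union> Gam). \<exists>z'\<in>Q. \<exists>j'\<le>length z.
        t2S @ pr Sig z = t1S @ pr Sig z' \<and> t2G @ pr Gam z = t1G @ pr Gam z' \<and>
        (\<forall>i\<le>j'. \<bar>l + slag Sig Gam (take i z)\<bar> \<le> int C \<and> \<bar>l' + slag Sig Gam (take i z')\<bar> \<le> int C) \<and>
        (j' = length z \<or> (\<forall>v\<in>lquot (take j' z') Q. shift Sig v \<le> B))})"

definition D1 :: "'a list \<Rightarrow> ('a list set \<times> 'a list \<times> 'a list \<times> 'a list \<times> 'a list \<times> int \<times> int) set" where
  "D1 x = {(lquot x' T', drop (length (pr Sig x)) (pr Sig x'), drop (length (pr Sig x')) (pr Sig x),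
            drop (length (pr Gam x)) (pr Gam x'), drop (length (pr Gam x')) (pr Gam x),
            slag Sig Gam x, slag Sig Gam x') | x'.
       x' \<in> lists (Sig \<union> Gam) \<and> length x' = length x \<and> bl x \<and> bl x' \<and>
       ((\<exists>t. pr Sig x' = pr Sig x @ t) \<or> (\<exists>t. pr Sig x = pr Sig x' @ t)) \<and>
       ((\<exists>t. pr Gam x' = pr Gam x @ t) \<or> (\<exists>t. pr Gam x = pr Gam x' @ t))}"

definition dec :: "'a list set \<Rightarrow> ('a list set \<times> 'a list set) set" where
  "dec Q = (SOME I. decomp Sig Gam Q I)"

definition D2 :: "'a list \<Rightarrow> ('a list set \<times> 'a list set) set" where
  "D2 x = {({\<sigma>. \<exists>\<alpha>\<in>fst p. pr Sig u' @ \<alpha> = pr Sig x @ \<sigma>}, {\<tau>. \<exists>\<beta>\<in>snd p. pr Gam u' @ \<beta> = pr Gam x @ \<tau>}) | u' p.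
       u' \<in> lists (Sig \<union> Gam) \<and> length u' \<le> length x \<and> bl (take (length u') x) \<and> bl u' \<and>
       (\<forall>v\<in>lquot u' T'. shift Sig v \<le> B) \<and> p \<in> dec (lquot u' T')}"

definition H2 :: "'a list set \<times> 'a list set \<Rightarrow> 'a list set" where
  "H2 EF = {z \<in> lists (Sig \<union> Gam). pr Sig z \<in> fst EF \<and> pr Gam z \<in> snd EF}"


lemma dec_ok:
  assumes disj: "Sig \<inter> Gam = {}" and regT: "regular (Sig \<union> Gam) T'"
    and bnd: "\<forall>v\<in>lquot u' T'. shift Sig v \<le> B"
  shows "decomp Sig Gam (lquot u' T') (dec (lquot u' T'))"
proof -
  have "\<exists>I. decomp Sig Gam (lquot u' T') I" by (rule rec_lemma[OF disj regular_lquot[OF regT] bnd])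
  then show ?thesis unfolding dec_def by (rule someI_ex)
qed

lemma sem_eq_iff: "sem X Y w = sem X Y w' \<longleftrightarrow> pr X w = pr X w' \<and> pr Y w = pr Y w'"
  by (simp add: sem_def)

lemma quot_sub:
  assumes disj: "Sig \<inter> Gam = {}" and regT: "regular (Sig \<union> Gam) T'" and x: "x \<in> lists (Sig \<union> Gam)"
    and zY: "z \<in> lquot x Yl"
  shows "z \<in> (\<Union>(contS ` D1 x)) \<union> (\<Union>(H2 ` D2 x))"
proof -
  have "x @ z \<in> Yl" using zY by (simp add: lquot_def)
  then obtain w' j where xzA: "x @ z \<in> lists (Sig \<union> Gam)" and w'T: "w' \<in> T'" and jle: "j \<le> length (x @ z)"
    and se: "sem Sig Gam w' = sem Sig Gam (x @ z)" and blxz: "bl (take j (x @ z))" and blw: "bl (take j w')"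
    and bd: "j = length (x @ z) \<or> (\<forall>v\<in>lquot (take j w') T'. shift Sig v \<le> B)"
    unfolding Yl_def by blast
  have zA: "z \<in> lists (Sig \<union> Gam)" using xzA by simp
  have w'A: "w' \<in> lists (Sig \<union> Gam)" using w'T regular_sub[OF regT] by blast
  have prS: "pr Sig w' = pr Sig x @ pr Sig z" and prG: "pr Gam w' = pr Gam x @ pr Gam z"
    using se by (auto simp: sem_def)
  have lenw': "length w' = length x + length z"
    using len_split[OF w'A disj] len_split[OF xzA disj] prS prG by simp
  show ?thesis
  proof (cases "length x \<le> j")
    case True
    define x' where "x' = take (length x) w'"
    define z' where "z' = drop (length x) w'"
    define j' where "j' = j - length x"
    have w'eq: "w' = x' @ z'" by (simp add: x'_def z'_def)
    have lx': "length x' = length x" using lenw' by (simp add: x'_def)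
    have x'A: "x' \<in> lists (Sig \<union> Gam)" unfolding x'_def using w'A by (auto dest: in_set_takeD)
    have jj: "j = length x + j'" using True by (simp add: j'_def)
    have tjxz: "take j (x @ z) = x @ take j' z" using jj by simp
    have tjw: "take j w' = x' @ take j' z'" using jj lx' w'eq by simp
    have blx: "bl x" using bl_take[OF blxz, of "length x"] unfolding tjxz by simp
    have blx': "bl x'" using bl_take[OF blw, of "length x"] unfolding tjw using lx' by simp
    have eS: "pr Sig x @ pr Sig z = pr Sig x' @ pr Sig z'" using prS w'eq by simp
    have eG: "pr Gam x @ pr Gam z = pr Gam x' @ pr Gam z'" using prG w'eq by simp
    have pcS: "(\<exists>t. pr Sig x' = pr Sig x @ t) \<or> (\<exists>t. pr Sig x = pr Sig x' @ t)" using common_ext[OF eS] .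
    have pcG: "(\<exists>t. pr Gam x' = pr Gam x @ t) \<or> (\<exists>t. pr Gam x = pr Gam x' @ t)" using common_ext[OF eG] .
    define \<delta> where "\<delta> = (lquot x' T', drop (length (pr Sig x)) (pr Sig x'), drop (length (pr Sig x')) (pr Sig x),
            drop (length (pr Gam x)) (pr Gam x'), drop (length (pr Gam x')) (pr Gam x),
            slag Sig Gam x, slag Sig Gam x')"
    have \<delta>D: "\<delta> \<in> D1 x" unfolding D1_def \<delta>_def using x'A lx' blx blx' pcS pcG by blast
    have bS: "drop (length (pr Sig x')) (pr Sig x) @ pr Sig z = drop (length (pr Sig x)) (pr Sig x') @ pr Sig z'"
      using buf_iff[OF buf_eq[OF pcS]] eS by blast
    have bG: "drop (length (pr Gam x')) (pr Gam x) @ pr Gam z = drop (length (pr Gam x)) (pr Gam x') @ pr Gam z'"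
      using buf_iff[OF buf_eq[OF pcG]] eG by blast
    have z'Q: "z' \<in> lquot x' T'" using w'T w'eq by (simp add: lquot_def)
    have j'le: "j' \<le> length z" using jle jj by simp
    have lagz: "\<forall>i\<le>j'. \<bar>slag Sig Gam x + slag Sig Gam (take i z)\<bar> \<le> int C \<and>
                         \<bar>slag Sig Gam x' + slag Sig Gam (take i z')\<bar> \<le> int C"
      using bl_append_inv[OF blxz[unfolded tjxz]] bl_append_inv[OF blw[unfolded tjw]] by blast
    have bd': "j' = length z \<or> (\<forall>v\<in>lquot (take j' z') (lquot x' T'). shift Sig v \<le> B)"
    proof (cases "j = length (x @ z)")
      case True then show ?thesis using jj by simp
    next
      case False
      then have "\<forall>v\<in>lquot (take j w') T'. shift Sig v \<le> B" using bd by blast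
      moreover have "lquot (take j w') T' = lquot (take j' z') (lquot x' T')" unfolding tjw by (rule lquot_append)
      ultimately show ?thesis by simp
    qed
    have "z \<in> contS \<delta>" unfolding contS_def \<delta>_def prod.case using zA z'Q j'le bS bG lagz bd' by blast
    then show ?thesis using \<delta>D by blast
  next
    case False
    define u' where "u' = take j w'"
    define v' where "v' = drop j w'"
    have w'eq: "w' = u' @ v'" by (simp add: u'_def v'_def)
    have lu': "length u' = j" using False lenw' by (simp add: u'_def)
    have u'A: "u' \<in> lists (Sig \<union> Gam)" unfolding u'_def using w'A by (auto dest: in_set_takeD)
    have tjx: "take j (x @ z) = take j x" using False by simp
    have blu: "bl (take (length u') x)" using blxz unfolding tjx lu' .
    have blu': "bl u'" using blw by (simp add: u'_def)
    have bnd: "\<forall>v\<in>lquot u' T'. shift Sig v \<le> B" using bd False by (auto simp: u'_def)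
    have dok: "decomp Sig Gam (lquot u' T') (dec (lquot u' T'))" by (rule dec_ok[OF disj regT bnd])
    have v'Q: "v' \<in> lquot u' T'" using w'T w'eq by (simp add: lquot_def)
    have "(pr Sig v', pr Gam v') \<in> semL Sig Gam (lquot u' T')" using v'Q by (auto simp: semL_def sem_def)
    then obtain p where p: "p \<in> dec (lquot u' T')" "pr Sig v' \<in> fst p" "pr Gam v' \<in> snd p"
      using dok unfolding decomp_def by blast
    define EF where "EF = ({\<sigma>. \<exists>\<alpha>\<in>fst p. pr Sig u' @ \<alpha> = pr Sig x @ \<sigma>}, {\<tau>. \<exists>\<beta>\<in>snd p. pr Gam u' @ \<beta> = pr Gam x @ \<tau>})"
    have lule: "length u' \<le> length x" using lu' False by simp
    have EFD: "EF \<in> D2 x" unfolding D2_def EF_def using u'A lule blu blu' bnd p(1) by blast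
    have "pr Sig u' @ pr Sig v' = pr Sig x @ pr Sig z" using prS w'eq by simp
    moreover have "pr Gam u' @ pr Gam v' = pr Gam x @ pr Gam z" using prG w'eq by simp
    ultimately have "z \<in> H2 EF" unfolding H2_def EF_def using zA p(2,3) by auto
    then show ?thesis using EFD by blast
  qed
qed


lemma quot_sup:
  assumes disj: "Sig \<inter> Gam = {}" and regT: "regular (Sig \<union> Gam) T'" and x: "x \<in> lists (Sig \<union> Gam)"
    and zz: "z \<in> (\<Union>(contS ` D1 x)) \<union> (\<Union>(H2 ` D2 x))"
  shows "z \<in> lquot x Yl"
proof -
  have "x @ z \<in> Yl"
  proof (cases "z \<in> \<Union>(contS ` D1 x)")
    case True
    then obtain \<delta> where \<delta>D: "\<delta> \<in> D1 x" and z\<delta>: "z \<in> contS \<delta>" by blast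
    from \<delta>D obtain x' where \<delta>: "\<delta> = (lquot x' T', drop (length (pr Sig x)) (pr Sig x'), drop (length (pr Sig x')) (pr Sig x),
            drop (length (pr Gam x)) (pr Gam x'), drop (length (pr Gam x')) (pr Gam x),
            slag Sig Gam x, slag Sig Gam x')"
      and x'A: "x' \<in> lists (Sig \<union> Gam)" and lx': "length x' = length x" and blx: "bl x" and blx': "bl x'"
      and pcS: "(\<exists>t. pr Sig x' = pr Sig x @ t) \<or> (\<exists>t. pr Sig x = pr Sig x' @ t)"
      and pcG: "(\<exists>t. pr Gam x' = pr Gam x @ t) \<or> (\<exists>t. pr Gam x = pr Gam x' @ t)"
      unfolding D1_def by blast
    from z\<delta> obtain z' j' where zA: "z \<in> lists (Sig \<union> Gam)" and z'Q: "z' \<in> lquot x' T'" and j'le: "j' \<le> length z"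
      and bS: "drop (length (pr Sig x')) (pr Sig x) @ pr Sig z = drop (length (pr Sig x)) (pr Sig x') @ pr Sig z'"
      and bG: "drop (length (pr Gam x')) (pr Gam x) @ pr Gam z = drop (length (pr Gam x)) (pr Gam x') @ pr Gam z'"
      and lagz: "\<forall>i\<le>j'. \<bar>slag Sig Gam x + slag Sig Gam (take i z)\<bar> \<le> int C \<and>
                         \<bar>slag Sig Gam x' + slag Sig Gam (take i z')\<bar> \<le> int C"
      and bd': "j' = length z \<or> (\<forall>v\<in>lquot (take j' z') (lquot x' T'). shift Sig v \<le> B)"
      unfolding contS_def \<delta> prod.case by blast
    define w' where "w' = x' @ z'"
    define j where "j = length x + j'"
    have w'T: "w' \<in> T'" using z'Q by (simp add: w'_def lquot_def)
    have jle: "j \<le> length (x @ z)" using j'le by (simp add: j_def)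
    have eS: "pr Sig x @ pr Sig z = pr Sig x' @ pr Sig z'" using buf_iff[OF buf_eq[OF pcS]] bS by blast
    have eG: "pr Gam x @ pr Gam z = pr Gam x' @ pr Gam z'" using buf_iff[OF buf_eq[OF pcG]] bG by blast
    have se: "sem Sig Gam w' = sem Sig Gam (x @ z)" using eS eG by (simp add: sem_def w'_def)
    have tjxz: "take j (x @ z) = x @ take j' z" by (simp add: j_def)
    have tjw: "take j w' = x' @ take j' z'" using lx' by (simp add: j_def w'_def)
    have bl1: "bl (take j (x @ z))" unfolding tjxz using bl_append[OF blx] lagz by blast
    have bl2: "bl (take j w')" unfolding tjw using bl_append[OF blx'] lagz by blast
    have bd: "j = length (x @ z) \<or> (\<forall>v\<in>lquot (take j w') T'. shift Sig v \<le> B)"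
    proof (cases "j' = length z")
      case True then show ?thesis by (simp add: j_def)
    next
      case False
      then have "\<forall>v\<in>lquot (take j' z') (lquot x' T'). shift Sig v \<le> B" using bd' by blast
      moreover have "lquot (take j w') T' = lquot (take j' z') (lquot x' T')" unfolding tjw by (rule lquot_append)
      ultimately show ?thesis by simp
    qed
    have "x @ z \<in> lists (Sig \<union> Gam)" using x zA by simp
    then show ?thesis unfolding Yl_def using w'T jle se bl1 bl2 bd by blast
  next
    case False
    then have "z \<in> \<Union>(H2 ` D2 x)" using zz by blast
    then obtain EF where EFD: "EF \<in> D2 x" and zH: "z \<in> H2 EF" by blast
    from EFD obtain u' p where EF: "EF = ({\<sigma>. \<exists>\<alpha>\<in>fst p. pr Sig u' @ \<alpha> = pr Sig x @ \<sigma>}, {\<tau>. \<exists>\<beta>\<in>snd p. pr Gam u' @ \<beta> = pr Gam x @ \<tau>})"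
      and u'A: "u' \<in> lists (Sig \<union> Gam)" and lule: "length u' \<le> length x" and blu: "bl (take (length u') x)"
      and blu': "bl u'" and bnd: "\<forall>v\<in>lquot u' T'. shift Sig v \<le> B" and p: "p \<in> dec (lquot u' T')"
      unfolding D2_def by blast
    from zH obtain \<alpha> \<beta> where zA: "z \<in> lists (Sig \<union> Gam)" and \<alpha>: "\<alpha> \<in> fst p" "pr Sig u' @ \<alpha> = pr Sig x @ pr Sig z"
      and \<beta>: "\<beta> \<in> snd p" "pr Gam u' @ \<beta> = pr Gam x @ pr Gam z"
      unfolding H2_def EF by auto
    have dok: "decomp Sig Gam (lquot u' T') (dec (lquot u' T'))" by (rule dec_ok[OF disj regT bnd])
    have "(\<alpha>, \<beta>) \<in> semL Sig Gam (lquot u' T')" using dok p \<alpha>(1) \<beta>(1) unfolding decomp_def by blast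
    then obtain v' where v'Q: "v' \<in> lquot u' T'" and v'\<alpha>: "pr Sig v' = \<alpha>" and v'\<beta>: "pr Gam v' = \<beta>"
      unfolding semL_def sem_def by auto
    define w' where "w' = u' @ v'"
    define j where "j = length u'"
    have w'T: "w' \<in> T'" using v'Q by (simp add: w'_def lquot_def)
    have jle: "j \<le> length (x @ z)" using lule by (simp add: j_def)
    have se: "sem Sig Gam w' = sem Sig Gam (x @ z)" using \<alpha>(2) \<beta>(2) v'\<alpha> v'\<beta> by (simp add: sem_def w'_def)
    have tjxz: "take j (x @ z) = take (length u') x" using lule by (simp add: j_def)
    have tjw: "take j w' = u'" by (simp add: j_def w'_def)
    have bl1: "bl (take j (x @ z))" unfolding tjxz by (rule blu)
    have bl2: "bl (take j w')" unfolding tjw by (rule blu')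
    have bd: "j = length (x @ z) \<or> (\<forall>v\<in>lquot (take j w') T'. shift Sig v \<le> B)" unfolding tjw using bnd by blast
    have "x @ z \<in> lists (Sig \<union> Gam)" using x zA by simp
    then show ?thesis unfolding Yl_def using w'T jle se bl1 bl2 bd by blast
  qed
  then show ?thesis by (simp add: lquot_def)
qed


lemma len_filter_take: "length (filter P (take k x)) \<le> length (filter P x)"
proof -
  have "filter P x = filter P (take k x) @ filter P (drop k x)"
    by (metis append_take_drop_id filter_append)
  then show ?thesis by (metis le_add1 length_append)
qed

lemma bl_counts:
  assumes disj: "Sig \<inter> Gam = {}" and "x \<in> lists (Sig \<union> Gam)" "x' \<in> lists (Sig \<union> Gam)"
    and "length x' = length x" "bl x" "bl x'"
  shows "length (pr Sig x') \<le> length (pr Sig x) + C" "length (pr Gam x') \<le> length (pr Gam x) + C"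
proof -
  have "length x = length (pr Sig x) + length (pr Gam x)" using len_split[OF assms(2) disj] .
  moreover have "length x' = length (pr Sig x') + length (pr Gam x')" using len_split[OF assms(3) disj] .
  moreover have "\<bar>slag Sig Gam x\<bar> \<le> int C" "\<bar>slag Sig Gam x'\<bar> \<le> int C" using bl_abs assms(5,6) by auto
  ultimately show "length (pr Sig x') \<le> length (pr Sig x) + C" "length (pr Gam x') \<le> length (pr Gam x) + C"
    using assms(4) unfolding slag_def by linarith+
qed

lemma pr_lists: "pr X w \<in> lists X" by auto

lemma Yl_regular:
  assumes disj: "Sig \<inter> Gam = {}" and finS: "finite Sig" and finG: "finite Gam" and regT: "regular (Sig \<union> Gam) T'"
  shows "regular (Sig \<union> Gam) Yl"
proof -
  let ?A = "Sig \<union> Gam"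
  define BS where "BS = {t. set t \<subseteq> Sig \<and> length t \<le> C}"
  define BG where "BG = {t. set t \<subseteq> Gam \<and> length t \<le> C}"
  have finBS: "finite BS" unfolding BS_def using finite_lists_length_le[OF finS] .
  have finBG: "finite BG" unfolding BG_def using finite_lists_length_le[OF finG] .
  have finQ: "finite (quots ?A T')" using regT by (simp add: regular_iff_quots)
  define D1U where "D1U = quots ?A T' \<times> BS \<times> BS \<times> BG \<times> BG \<times> {-int C..int C} \<times> {-int C..int C}"
  have finD1U: "finite D1U" unfolding D1U_def using finQ finBS finBG by simp
  define QB where "QB = {Q \<in> quots ?A T'. \<forall>v\<in>Q. shift Sig v \<le> B}"
  have finQB: "finite QB" using finQ by (simp add: QB_def)
  have decQB: "decomp Sig Gam Q (dec Q)" if "Q \<in> QB" for Q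
  proof -
    have "Q \<in> quots ?A T'" "\<forall>v\<in>Q. shift Sig v \<le> B" using that unfolding QB_def by auto
    then obtain u where "Q = lquot u T'" "\<forall>v\<in>lquot u T'. shift Sig v \<le> B" unfolding quots_def by blast
    then show ?thesis using dec_ok[OF disj regT] by blast
  qed
  define UUS where "UUS = (\<Union>Q\<in>QB. fst ` dec Q)"
  define UUG where "UUG = (\<Union>Q\<in>QB. snd ` dec Q)"
  have finUUS: "finite UUS" unfolding UUS_def using finQB decQB by (auto simp: decomp_def)
  have finUUG: "finite UUG" unfolding UUG_def using finQB decQB by (auto simp: decomp_def)
  have regUUS: "regular Sig U" if "U \<in> UUS" for U using that decQB by (auto simp: UUS_def decomp_def)
  have regUUG: "regular Gam U" if "U \<in> UUG" for U using that decQB by (auto simp: UUG_def decomp_def)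
  define FS where "FS = {(\<lambda>\<alpha>. t @ \<alpha>) ` U | t U. U \<in> UUS \<and> t \<in> BS} \<union> (\<Union>U\<in>UUS. quots Sig U) \<union> {{}}"
  define FG where "FG = {(\<lambda>\<alpha>. t @ \<alpha>) ` U | t U. U \<in> UUG \<and> t \<in> BG} \<union> (\<Union>U\<in>UUG. quots Gam U) \<union> {{}}"
  have finFS: "finite FS"
  proof -
    have "{(\<lambda>\<alpha>. t @ \<alpha>) ` U | t U. U \<in> UUS \<and> t \<in> BS} = (\<lambda>(t, U). (\<lambda>\<alpha>. t @ \<alpha>) ` U) ` (BS \<times> UUS)" by auto
    moreover have "finite (\<Union>U\<in>UUS. quots Sig U)" using finUUS regUUS by (auto simp: regular_iff_quots)
    ultimately show ?thesis unfolding FS_def using finBS finUUS by simp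
  qed
  have finFG: "finite FG"
  proof -
    have "{(\<lambda>\<alpha>. t @ \<alpha>) ` U | t U. U \<in> UUG \<and> t \<in> BG} = (\<lambda>(t, U). (\<lambda>\<alpha>. t @ \<alpha>) ` U) ` (BG \<times> UUG)" by auto
    moreover have "finite (\<Union>U\<in>UUG. quots Gam U)" using finUUG regUUG by (auto simp: regular_iff_quots)
    ultimately show ?thesis unfolding FG_def using finBG finUUG by simp
  qed
  define D2U where "D2U = FS \<times> FG"
  have finD2U: "finite D2U" using finFS finFG by (simp add: D2U_def)
  have D1sub: "D1 x \<subseteq> D1U" if x: "x \<in> lists ?A" for x
  proof
    fix \<delta> assume "\<delta> \<in> D1 x"
    then obtain x' where \<delta>: "\<delta> = (lquot x' T', drop (length (pr Sig x)) (pr Sig x'), drop (length (pr Sig x')) (pr Sig x),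
            drop (length (pr Gam x)) (pr Gam x'), drop (length (pr Gam x')) (pr Gam x),
            slag Sig Gam x, slag Sig Gam x')"
      and x'A: "x' \<in> lists ?A" and lx': "length x' = length x" and blx: "bl x" and blx': "bl x'"
      unfolding D1_def by blast
    have c1: "length (pr Sig x') \<le> length (pr Sig x) + C" "length (pr Gam x') \<le> length (pr Gam x) + C"
      using bl_counts[OF disj x x'A lx' blx blx'] by auto
    have c2: "length (pr Sig x) \<le> length (pr Sig x') + C" "length (pr Gam x) \<le> length (pr Gam x') + C"
      using bl_counts[OF disj x'A x lx'[symmetric] blx' blx] by auto
    have "lquot x' T' \<in> quots ?A T'" using x'A by (auto simp: quots_def)
    moreover have "drop (length (pr Sig x)) (pr Sig x') \<in> BS" "drop (length (pr Sig x')) (pr Sig x) \<in> BS"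
      using c1 c2 by (auto simp: BS_def dest: in_set_dropD)
    moreover have "drop (length (pr Gam x)) (pr Gam x') \<in> BG" "drop (length (pr Gam x')) (pr Gam x) \<in> BG"
      using c1 c2 by (auto simp: BG_def dest: in_set_dropD)
    moreover have "slag Sig Gam x \<in> {-int C..int C}" "slag Sig Gam x' \<in> {-int C..int C}"
      using bl_abs[OF blx] bl_abs[OF blx'] by auto
    ultimately show "\<delta> \<in> D1U" unfolding \<delta> D1U_def by blast
  qed
  have D2sub: "D2 x \<subseteq> D2U" if x: "x \<in> lists ?A" for x
  proof
    fix EF assume "EF \<in> D2 x"
    then obtain u' p where EF: "EF = ({\<sigma>. \<exists>\<alpha>\<in>fst p. pr Sig u' @ \<alpha> = pr Sig x @ \<sigma>}, {\<tau>. \<exists>\<beta>\<in>snd p. pr Gam u' @ \<beta> = pr Gam x @ \<tau>})"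
      and u'A: "u' \<in> lists ?A" and lule: "length u' \<le> length x" and blu: "bl (take (length u') x)"
      and blu': "bl u'" and bnd: "\<forall>v\<in>lquot u' T'. shift Sig v \<le> B" and p: "p \<in> dec (lquot u' T')"
      unfolding D2_def by blast
    have QB: "lquot u' T' \<in> QB" using u'A bnd by (auto simp: QB_def quots_def)
    have fU: "fst p \<in> UUS" "snd p \<in> UUG" using QB p by (auto simp: UUS_def UUG_def)
    have tA: "take (length u') x \<in> lists ?A" using x by (auto dest: in_set_takeD)
    have lt: "length (take (length u') x) = length u'" using lule by simp
    have c: "length (pr Sig u') \<le> length (pr Sig (take (length u') x)) + C"
            "length (pr Gam u') \<le> length (pr Gam (take (length u') x)) + C"
      using bl_counts[OF disj tA u'A lt[symmetric] blu blu'] by auto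
    have cS: "length (pr Sig u') \<le> length (pr Sig x) + C" using c(1) len_filter_take[of "\<lambda>x. x \<in> Sig" "length u'" x] by linarith
    have cG: "length (pr Gam u') \<le> length (pr Gam x) + C" using c(2) len_filter_take[of "\<lambda>x. x \<in> Gam" "length u'" x] by linarith
    have "fst EF \<in> FS"
    proof -
      have "fst EF \<in> {(\<lambda>\<alpha>. t @ \<alpha>) ` fst p | t. t \<in> lists Sig \<and> length t \<le> C} \<union> {lquot t (fst p) | t. t \<in> lists Sig} \<union> {{}}"
        unfolding EF fst_conv by (rule E_form[OF cS pr_lists pr_lists])
      then show ?thesis unfolding FS_def BS_def by (rule FS_mem[OF _ fU(1)])
    qed
    moreover have "snd EF \<in> FG"
    proof -
      have "snd EF \<in> {(\<lambda>\<alpha>. t @ \<alpha>) ` snd p | t. t \<in> lists Gam \<and> length t \<le> C} \<union> {lquot t (snd p) | t. t \<in> lists Gam} \<union> {{}}"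
        unfolding EF snd_conv by (rule E_form[OF cG pr_lists pr_lists])
      then show ?thesis unfolding FG_def BG_def by (rule FS_mem[OF _ fU(2)])
    qed
    ultimately show "EF \<in> D2U" unfolding D2U_def by (simp add: mem_Times_iff)
  qed
  show ?thesis
  proof (rule regular_by_data[where D = "Pow D1U \<times> Pow D2U" and H = "\<lambda>(S1, S2). (\<Union>(contS ` S1)) \<union> (\<Union>(H2 ` S2))"])
    show "Yl \<subseteq> lists ?A" unfolding Yl_def by blast
    show "finite (Pow D1U \<times> Pow D2U)" using finD1U finD2U by simp
    fix x assume x: "x \<in> lists ?A"
    have "lquot x Yl = (\<Union>(contS ` D1 x)) \<union> (\<Union>(H2 ` D2 x))"
      using quot_sub[OF disj regT x] quot_sup[OF disj regT x] by blast
    moreover have "(D1 x, D2 x) \<in> Pow D1U \<times> Pow D2U" using D1sub[OF x] D2sub[OF x] by blast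
    ultimately show "\<exists>d\<in>Pow D1U \<times> Pow D2U. lquot x Yl = (case d of (S1, S2) \<Rightarrow> (\<Union>(contS ` S1)) \<union> (\<Union>(H2 ` S2)))"
      by (intro bexI[of _ "(D1 x, D2 x)"]) auto
  qed
qed

end

lemma RegFS_up:
  assumes regT: "regular (Sig \<union> Gam) T" and R: "RegFS Sig Gam (lquot (take i w) T)" and ij: "i \<le> j"
  shows "RegFS Sig Gam (lquot (take j w) T)"
proof -
  obtain N where N: "\<forall>v\<in>lquot (take i w) T. shift Sig v \<le> N" using R by (auto simp: RegFS_def finite_shift_def)
  define y where "y = drop i (take j w)"
  have tj: "take j w = take i w @ y" unfolding y_def using ij
    by (metis append_take_drop_id min.absorb1 take_take)
  have "\<forall>z\<in>lquot (take j w) T. shift Sig z \<le> N"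
  proof
    fix z assume "z \<in> lquot (take j w) T"
    then have "y @ z \<in> lquot (take i w) T" unfolding tj by (simp add: lquot_def)
    then have "shift Sig (y @ z) \<le> N" using N by blast
    then show "shift Sig z \<le> N" using shift_append_ge[of Sig z y] by linarith
  qed
  then show ?thesis unfolding RegFS_def finite_shift_def using regular_lquot[OF regT] by blast
qed

lemma upclosed_card_sub:
  fixes P1 P2 :: "nat set"
  assumes s1: "P1 \<subseteq> {0..L}" and s2: "P2 \<subseteq> {0..L}"
    and u1: "\<And>i j. i \<in> P1 \<Longrightarrow> i \<le> j \<Longrightarrow> j \<le> L \<Longrightarrow> j \<in> P1"
    and u2: "\<And>i j. i \<in> P2 \<Longrightarrow> i \<le> j \<Longrightarrow> j \<le> L \<Longrightarrow> j \<in> P2"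
    and c: "card P1 \<le> card P2"
  shows "P1 \<subseteq> P2"
proof
  fix a assume a1: "a \<in> P1"
  show "a \<in> P2"
  proof (rule ccontr)
    assume a2: "a \<notin> P2"
    have aL: "a \<le> L" using a1 s1 by auto
    have "P2 \<subseteq> {Suc a..L}"
    proof
      fix b assume b: "b \<in> P2"
      have "\<not> b \<le> a" using u2[OF b _ aL] a2 by blast
      then show "b \<in> {Suc a..L}" using b s2 by auto
    qed
    then have "card P2 \<le> L - a" using card_mono[of "{Suc a..L}" P2] by simp
    moreover have "{a..L} \<subseteq> P1" using u1[OF a1] by auto
    then have "L - a + 1 \<le> card P1" using card_mono[of P1 "{a..L}"] s1 aL finite_subset[OF s1] by simp
    ultimately show False using c by linarith
  qed
qed

lemma len_sem:
  assumes "w \<in> lists (Sig \<union> Gam)" "w' \<in> lists (Sig \<union> Gam)" "Sig \<inter> Gam = {}" "sem Sig Gam w = sem Sig Gam w'"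
  shows "length w = length w'"
  using len_split[OF assms(1,3)] len_split[OF assms(2,3)] assms(4) by (simp add: sem_def)

lemma slag_step: "X \<inter> Y = {} \<Longrightarrow> \<bar>slag X Y (take (Suc m) u)\<bar> \<le> \<bar>slag X Y (take m u)\<bar> + 1"
proof (cases "m < length u")
  case True
  assume d: "X \<inter> Y = {}"
  have "take (Suc m) u = take m u @ [u ! m]" using True by (simp add: take_Suc_conv_app_nth)
  then have "slag X Y (take (Suc m) u) = slag X Y (take m u) + slag X Y [u ! m]" by simp
  then show ?thesis using slag_single[OF d, of "u ! m"] by linarith
next
  case False
  then show ?thesis by simp
qed

lemma bl_from_strict:
  assumes d: "Sig \<inter> Gam = {}" and h: "\<forall>m<j. \<bar>slag Sig Gam (take m u)\<bar> < int C"
  shows "bl Sig Gam C (take j u)"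
  unfolding bl_def
proof
  fix k
  have tk: "take k (take j u) = take (min k j) u" by simp
  show "\<bar>slag Sig Gam (take k (take j u))\<bar> \<le> int C"
  proof (cases "min k j < j")
    case True then show ?thesis using h tk by fastforce
  next
    case False
    then have mj: "min k j = j" by simp
    show ?thesis
    proof (cases j)
      case 0 then show ?thesis using tk mj by simp
    next
      case (Suc m)
      have "\<bar>slag Sig Gam (take m u)\<bar> < int C" using h Suc by simp
      then show ?thesis using slag_step[OF d, of m u] tk mj Suc by simp
    qed
  qed
qed


definition Pset :: "'a set \<Rightarrow> 'a set \<Rightarrow> 'a list set \<Rightarrow> 'a list \<Rightarrow> nat set" where
  "Pset Sig Gam T u = {i. i \<le> length u \<and> RegFS Sig Gam (lquot (take i u) T)}"

lemma dir_left:
  assumes disj: "Sig \<inter> Gam = {}" and regT: "regular (Sig \<union> Gam) T"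
    and regM: "regular (Sig \<union> Gam) (maxsync Sig Gam S T)" and sub: "semL Sig Gam S \<subseteq> semL Sig Gam T"
  shows "semL Sig Gam S \<in> Rel Sig Gam T"
proof -
  let ?M = "maxsync Sig Gam S T"
  have MT: "?M \<subseteq> T" by (auto simp: maxsync_def)
  have TA: "T \<subseteq> lists (Sig \<union> Gam)" using regT regular_sub by blast
  have "semL Sig Gam ?M = semL Sig Gam S"
  proof
    show "semL Sig Gam ?M \<subseteq> semL Sig Gam S" unfolding maxsync_def semL_def by blast
  next
    show "semL Sig Gam S \<subseteq> semL Sig Gam ?M"
    proof
      fix pr assume prS: "pr \<in> semL Sig Gam S"
      then have "pr \<in> semL Sig Gam T" using sub by blast
      then obtain w0 where w0: "w0 \<in> T \<and> sem Sig Gam w0 = pr" unfolding semL_def by blast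
      obtain w where w: "w \<in> T \<and> sem Sig Gam w = pr"
        and wmin: "\<forall>y. y \<in> T \<and> sem Sig Gam y = pr \<longrightarrow> card (Pset Sig Gam T w) \<le> card (Pset Sig Gam T y)"
        using ex_has_least_nat[of "\<lambda>y. y \<in> T \<and> sem Sig Gam y = pr" w0 "\<lambda>y. card (Pset Sig Gam T y)"] w0 by blast
      have "\<forall>w'\<in>T. sem Sig Gam w' = sem Sig Gam w \<longrightarrow> preceq Sig Gam T w' w"
      proof (intro ballI impI)
        fix w' assume w'T: "w' \<in> T" and se: "sem Sig Gam w' = sem Sig Gam w"
        have L: "length w = length w'" using len_sem[of w Sig Gam w'] TA w w'T se disj by auto
        have c: "card (Pset Sig Gam T w) \<le> card (Pset Sig Gam T w')" using wmin w'T se w by auto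
        have up: "\<And>u i j. i \<in> Pset Sig Gam T u \<Longrightarrow> i \<le> j \<Longrightarrow> j \<le> length u \<Longrightarrow> j \<in> Pset Sig Gam T u"
          unfolding Pset_def using RegFS_up[OF regT] by blast
        have "Pset Sig Gam T w \<subseteq> Pset Sig Gam T w'"
          by (rule upclosed_card_sub[where L = "length w"]) (use up L c in \<open>auto simp: Pset_def\<close>)
        then have "\<forall>i\<le>length w'. RegFS Sig Gam (lquot (take i w) T) \<longrightarrow> RegFS Sig Gam (lquot (take i w') T)"
          using L unfolding Pset_def by auto
        then show "preceq Sig Gam T w' w" unfolding preceq_def using w'T w se by blast
      qed
      moreover have "sem Sig Gam w \<in> semL Sig Gam S" using w prS by simp
      ultimately have "w \<in> ?M" using w unfolding maxsync_def by blast
      then show "pr \<in> semL Sig Gam ?M" using w unfolding semL_def by blast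
    qed
  qed
  then show ?thesis unfolding Rel_def using MT regM by blast
qed


lemma dir_right:
  assumes disj: "Sig \<inter> Gam = {}" and finS: "finite Sig" and finG: "finite Gam"
    and regT: "regular (Sig \<union> Gam) T" and fslT: "finite_shiftlag Sig Gam T"
    and regMT: "regular (Sig \<union> Gam) (maxsync Sig Gam T T)" and rel: "semL Sig Gam S \<in> Rel Sig Gam T"
  shows "regular (Sig \<union> Gam) (maxsync Sig Gam S T) \<and> semL Sig Gam S \<subseteq> semL Sig Gam T"
proof -
  let ?A = "Sig \<union> Gam"
  obtain T' where T'T: "T' \<subseteq> T" and regT': "regular ?A T'" and eqS: "semL Sig Gam S = semL Sig Gam T'"
    using rel unfolding Rel_def by blast
  have sub: "semL Sig Gam S \<subseteq> semL Sig Gam T" using T'T eqS unfolding semL_def by blast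
  have TA: "T \<subseteq> lists ?A" using regT regular_sub by blast
  obtain C0 N where pump: "\<forall>x z. x @ z \<in> T \<and> int C0 \<le> \<bar>slag Sig Gam x\<bar> \<longrightarrow> shift Sig z \<le> N"
    using pumping[OF disj regT fslT] by blast
  have small: "\<bar>slag Sig Gam x\<bar> < int C0" if "\<not> RegFS Sig Gam (lquot x T)" for x
  proof (rule ccontr)
    assume "\<not> \<bar>slag Sig Gam x\<bar> < int C0"
    then have ge: "int C0 \<le> \<bar>slag Sig Gam x\<bar>" by simp
    have "\<forall>z\<in>lquot x T. shift Sig z \<le> N"
    proof
      fix z assume "z \<in> lquot x T"
      then have "x @ z \<in> T" by (simp add: lquot_def)
      then show "shift Sig z \<le> N" using pump ge by blast
    qed
    then have "RegFS Sig Gam (lquot x T)" unfolding RegFS_def finite_shift_def using regular_lquot[OF regT] by blast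
    then show False using that by blast
  qed
  define FSQ where "FSQ = {Q \<in> quots ?A T. finite_shift Sig Q}"
  have finFSQ: "finite FSQ" using regT unfolding FSQ_def by (simp add: regular_iff_quots)
  have "\<forall>Q\<in>FSQ. \<exists>n. \<forall>v\<in>Q. shift Sig v \<le> n" unfolding FSQ_def finite_shift_def by blast
  then obtain f where f: "\<forall>Q\<in>FSQ. \<forall>v\<in>Q. shift Sig v \<le> f Q" by metis
  define B where "B = Max (insert 0 (f ` FSQ))"
  have Bb: "\<forall>v\<in>lquot x T. shift Sig v \<le> B" if "x \<in> lists ?A" "RegFS Sig Gam (lquot x T)" for x
  proof
    fix v assume v: "v \<in> lquot x T"
    have Q: "lquot x T \<in> FSQ" using that unfolding FSQ_def quots_def RegFS_def by blast
    then have "f (lquot x T) \<le> B" unfolding B_def using finFSQ by (intro Max_ge) auto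
    then show "shift Sig v \<le> B" using f Q v by fastforce
  qed
  have eq: "maxsync Sig Gam S T = maxsync Sig Gam T T \<inter> Yl Sig Gam T' C0 B"
  proof
    show "maxsync Sig Gam S T \<subseteq> maxsync Sig Gam T T \<inter> Yl Sig Gam T' C0 B"
    proof
      fix w assume wM: "w \<in> maxsync Sig Gam S T"
      then have wT: "w \<in> T" and wS: "sem Sig Gam w \<in> semL Sig Gam S"
        and cond: "\<forall>w'\<in>T. sem Sig Gam w' = sem Sig Gam w \<longrightarrow> preceq Sig Gam T w' w"
        unfolding maxsync_def by auto
      have "w \<in> maxsync Sig Gam T T" unfolding maxsync_def semL_def using wT cond by blast
      moreover have "w \<in> Yl Sig Gam T' C0 B"
      proof -
        obtain w' where w'T': "w' \<in> T'" and se: "sem Sig Gam w' = sem Sig Gam w"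
          using wS eqS unfolding semL_def by auto
        have w'T: "w' \<in> T" using w'T' T'T by blast
        have wA: "w \<in> lists ?A" and w'A: "w' \<in> lists ?A" using wT w'T TA by auto
        have L: "length w' = length w" using len_sem[OF w'A wA disj se] .
        have pre: "\<forall>i\<le>length w'. RegFS Sig Gam (lquot (take i w) T) \<longrightarrow> RegFS Sig Gam (lquot (take i w') T)"
          using cond w'T se unfolding preceq_def by blast
        define R where "R i = (i \<le> length w' \<and> RegFS Sig Gam (lquot (take i w') T))" for i
        define j where "j = (if \<exists>i. R i then (LEAST i. R i) else length w')"
        have jle: "j \<le> length w'"
        proof (cases "\<exists>i. R i")
          case True
          then have "R (LEAST i. R i)" by (rule LeastI_ex)
          then show ?thesis using True unfolding j_def R_def by simp
        qed (simp add: j_def)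
        have notR: "\<not> RegFS Sig Gam (lquot (take m w') T)" if "m < j" for m
        proof (cases "\<exists>i. R i")
          case True
          then have "\<not> R m" using that not_less_Least unfolding j_def by auto
          then show ?thesis using that jle unfolding R_def by simp
        next
          case False
          then show ?thesis using that jle unfolding R_def by auto
        qed
        have bl2: "bl Sig Gam C0 (take j w')"
          by (rule bl_from_strict[OF disj]) (use notR small in blast)
        have bl1: "bl Sig Gam C0 (take j w)"
        proof (rule bl_from_strict[OF disj], intro allI impI)
          fix m
          assume mj: "m < j"
          then have mle: "m \<le> length w'" using jle by simp
          have "\<not> RegFS Sig Gam (lquot (take m w') T)" using notR[OF mj] .
          then have "\<not> RegFS Sig Gam (lquot (take m w) T)" using pre mle by blast
          then show "\<bar>slag Sig Gam (take m w)\<bar> < int C0" by (rule small)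
        qed
        have bd: "j = length w \<or> (\<forall>v\<in>lquot (take j w') T'. shift Sig v \<le> B)"
        proof (cases "\<exists>i. R i")
          case True
          then have "R (LEAST i. R i)" by (rule LeastI_ex)
          then have Rj: "RegFS Sig Gam (lquot (take j w') T)" using True unfolding j_def R_def by simp
          have "take j w' \<in> lists ?A" using w'A by (auto dest: in_set_takeD)
          then have "\<forall>v\<in>lquot (take j w') T. shift Sig v \<le> B" using Bb Rj by blast
          moreover have "lquot (take j w') T' \<subseteq> lquot (take j w') T" using T'T unfolding lquot_def by blast
          ultimately show ?thesis by blast
        next
          case False
          then have "j = length w'" unfolding j_def by (rule if_not_P)
          then show ?thesis using L by simp
        qed
        show ?thesis unfolding Yl_def using wA w'T' jle L se bl1 bl2 bd by fastforce
      qed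
      ultimately show "w \<in> maxsync Sig Gam T T \<inter> Yl Sig Gam T' C0 B" by blast
    qed
  next
    show "maxsync Sig Gam T T \<inter> Yl Sig Gam T' C0 B \<subseteq> maxsync Sig Gam S T"
    proof
      fix w assume w: "w \<in> maxsync Sig Gam T T \<inter> Yl Sig Gam T' C0 B"
      then obtain w' where "w' \<in> T'" "sem Sig Gam w' = sem Sig Gam w" unfolding Yl_def by blast
      then have "sem Sig Gam w \<in> semL Sig Gam T'" unfolding semL_def by (metis image_eqI)
      then have "sem Sig Gam w \<in> semL Sig Gam S" using eqS by simp
      then show "w \<in> maxsync Sig Gam S T" using w unfolding maxsync_def by blast
    qed
  qed
  have "regular ?A (maxsync Sig Gam S T)"
    unfolding eq by (rule regular_Int[OF regMT Yl_regular[OF disj finS finG regT']])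
  then show ?thesis using sub by blast
qed

theorem mainTheorem14:
  fixes Sig Gam :: "'a set" and S T :: "'a list set"
  assumes "finite Sig" and "finite Gam" and "Sig \<inter> Gam = {}"
    and "regular (Sig \<union> Gam) S" and "regular (Sig \<union> Gam) T"
    and "finite_shiftlag Sig Gam S" and "finite_shiftlag Sig Gam T"
    and "regular (Sig \<union> Gam) (maxsync Sig Gam T T)"
  shows "semL Sig Gam S \<in> Rel Sig Gam T \<longleftrightarrow>
         regular (Sig \<union> Gam) (maxsync Sig Gam S T) \<and> semL Sig Gam S \<subseteq> semL Sig Gam T"
  using dir_right[OF assms(3,1,2,5,7,8)] dir_left[OF assms(3,5)] by blast

end
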